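(* In the setting below, if $q>(30n d_1)^{\frac{2t+2}{t-2n}}$, then the Markoff–Hurwitz-type system has at least one solution in $(\mathbb F_q^* )^t$.
   Context: Setting: $\mathbb F_q$ is a finite field, $t,n$ positive integers with $1\le n<\frac{t-1}{2}$, and $d_1>\cdots>d_t\ge 2$ integers not divisible by $\mathrm{char}(\mathbb F_q)$. $c_{ji}$ ($1\le i,j\le n$) are positive integers with $c_{j1}+\cdots+c_{jn}<d_t$ for each $j$. $A=(a_{ji})\in\mathbb F_q^{n\times t}$ satisfies hypothesis (H): every $n\times n$ submatrix of $A$ (formed by any choice of $n$ columns) has rank $n$. $a_1,\dots,a_n\in\mathbb F_q$ with $a_j\ne0$ for some $j$, and $b_1,\dots,b_n\in\mathbb F_q\setminus\{0\}$. The Markoff–Hurwitz-type system is $\sum_{i=1}^t a_{ji}X_i^{d_i}+a_j=b_jX_1^{c_{j1}}\cdots X_n^{c_{jn}}$, $1\le j\le n$. *)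

theory Defs
  imports Complex_Main "Jordan_Normal_Form.DL_Rank"
begin

(* Rank of a matrix over a field (Jordan_Normal_Form's vec_space.rank,
   the dimension of the column span); the first argument of vec_space is the
   number of rows (dimension of column vectors). *)
definition mat_rank :: "'a::field mat \<Rightarrow> nat" where
  "mat_rank M = vec_space.rank (dim_row M) M"

definition hyp_H :: "nat \<Rightarrow> nat \<Rightarrow> (nat \<Rightarrow> nat \<Rightarrow> 'a::field) \<Rightarrow> bool" where
  "hyp_H n t A \<longleftrightarrow>
     (\<forall>f. inj_on f {0..<n} \<longrightarrow> f ` {0..<n} \<subseteq> {1..t} \<longrightarrow>
        mat_rank (mat n n (\<lambda>(r, k). A (r + 1) (f k))) = n)"

end

theory Submission
  imports Defs "HOL-Computational_Algebra.Computational_Algebra" "HOL-Number_Theory.Cong"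
begin


section \<open>Finite field basics\<close>

lemma ff_prime_char: "prime CHAR('a::{finite,field})"
  by (intro prime_CHAR_semidom finite_imp_CHAR_pos) simp

lemma ff_card_ge2: "card (UNIV :: 'a::{finite,field} set) \<ge> 2"
proof -
  have "{0, 1::'a} \<subseteq> UNIV" by simp
  hence "card {0, 1::'a} \<le> card (UNIV :: 'a set)" by (intro card_mono) auto
  thus ?thesis by simp
qed

lemma ff_power_card:
  fixes x :: "'a :: {finite,field}"
  shows "x ^ card (UNIV :: 'a set) = x"
proof (cases "x = 0")
  case False
  have "x * (\<Prod>y\<in>UNIV-{0}. x * y) = x * x ^ (card (UNIV :: 'a set) - 1) * \<Prod>(UNIV-{0})"
    by (simp add: prod.distrib mult_ac)
  also have "x * x ^ (card (UNIV :: 'a set) - 1) = x ^ Suc (card (UNIV :: 'a set) - 1)"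
    by (subst power_Suc) auto
  also have "Suc (card (UNIV :: 'a set) - 1) = card (UNIV :: 'a set)"
    using finite_UNIV_card_ge_0[where ?'a = 'a] by simp
  also have "(\<Prod>y\<in>UNIV-{0}. x * y) = (\<Prod>y\<in>UNIV-{0}. y)"
    by (rule prod.reindex_bij_witness[of _ "\<lambda>y. y / x" "\<lambda>y. x * y"]) (use False in auto)
  finally show ?thesis
    by simp
qed (use finite_UNIV_card_ge_0[where ?'a = 'a] in auto)

lemma ff_power_card_minus1:
  fixes x :: "'a :: {finite,field}"
  assumes "x \<noteq> 0"
  shows "x ^ (card (UNIV :: 'a set) - 1) = 1"
proof -
  have "x * x ^ (card (UNIV :: 'a set) - 1) = x ^ Suc (card (UNIV :: 'a set) - 1)" by simp
  also have "Suc (card (UNIV :: 'a set) - 1) = card (UNIV :: 'a set)" using ff_card_ge2[where 'a='a] by simp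
  finally have "x * x ^ (card (UNIV :: 'a set) - 1) = x * 1" using ff_power_card[of x] by simp
  thus ?thesis using assms by simp
qed

lemma card_roots_le:
  fixes P :: "'a::{comm_ring_1,ring_no_zero_divisors} poly"
  assumes "coeff P N \<noteq> 0" "degree P \<le> N"
  shows "card {x. poly P x = 0} \<le> N"
proof -
  have "P \<noteq> 0" using assms(1) by auto
  thus ?thesis using card_poly_roots_bound[of P] assms(2) by linarith
qed

lemma card_pow_eq_le:
  fixes c :: "'a::{comm_ring_1,ring_no_zero_divisors}"
  assumes "d \<ge> 1"
  shows "card {x. x ^ d = c} \<le> d"
proof -
  let ?P = "monom 1 d - [:c:]"
  have "coeff ?P d = 1" using assms by (cases d) (simp_all add: coeff_monom coeff_pCons)
  moreover have "degree ?P \<le> d"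
    by (rule order.trans[OF degree_diff_le_max]) (simp add: degree_monom_le)
  ultimately have "card {x. poly ?P x = 0} \<le> d" by (intro card_roots_le) auto
  moreover have "{x. poly ?P x = 0} = {x. x ^ d = c}" by (auto simp: poly_monom)
  ultimately show ?thesis by simp
qed

section \<open>Additive subgroups and the cardinality of a finite field\<close>

definition addsub :: "'a::{finite,field} set \<Rightarrow> bool" where
  "addsub G \<longleftrightarrow> 0 \<in> G \<and> (\<forall>x\<in>G. \<forall>y\<in>G. x + y \<in> G)"

lemma addsub_of_nat: "addsub G \<Longrightarrow> x \<in> G \<Longrightarrow> of_nat k * x \<in> G"
  by (induction k) (auto simp: addsub_def distrib_right)

lemma char_minus_one: "of_nat (CHAR('a) - Suc 0) = (- 1 :: 'a::{finite,field})"
proof -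
  have "CHAR('a) > 0" by (rule finite_imp_CHAR_pos[OF finite_UNIV])
  then obtain m where m: "CHAR('a) = Suc m" using gr0_implies_Suc by blast
  have "(of_nat (Suc m) :: 'a) = 0" by (simp only: m[symmetric] of_nat_CHAR)
  hence "(of_nat m :: 'a) + 1 = 0" by (simp add: add.commute)
  hence "(of_nat m :: 'a) = - 1" by (simp add: eq_neg_iff_add_eq_0)
  thus ?thesis using m by simp
qed

lemma addsub_uminus:
  assumes "addsub (G::'a::{finite,field} set)" "x \<in> G" shows "- x \<in> G"
proof -
  have "of_nat (CHAR('a) - Suc 0) * x \<in> G" using addsub_of_nat[OF assms] .
  thus ?thesis by (simp add: char_minus_one)
qed

lemma of_nat_inverse_in_range:
  assumes "(of_nat k :: 'a::{finite,field}) \<noteq> 0"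
  shows "\<exists>k'. inverse (of_nat k :: 'a) = of_nat k'"
proof -
  let ?q = "card (UNIV :: 'a set)"
  have "(of_nat k :: 'a) * of_nat k ^ (?q - 2) = of_nat k ^ (?q - 1)"
  proof -
    have "?q - 1 = Suc (?q - 2)" using ff_card_ge2[where 'a='a] by simp
    thus ?thesis by simp
  qed
  also have "\<dots> = 1" using ff_power_card_minus1 assms by blast
  finally have "inverse (of_nat k :: 'a) = of_nat k ^ (?q - 2)" using assms by (simp add: field_simps)
  thus ?thesis by (metis of_nat_power)
qed

lemma addsub_extend:
  fixes G :: "'a::{finite,field} set"
  assumes G: "addsub G" and x: "x \<notin> G"
  defines "G' \<equiv> (\<lambda>(g,k). g + of_nat k * x) ` (G \<times> {..<CHAR('a)})"
  shows "addsub G'" "card G' = card G * CHAR('a)"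
proof -
  let ?p = "CHAR('a)"
  have p: "prime ?p" by (rule ff_prime_char)
  hence p0: "?p > 0" using prime_gt_0_nat by blast
  show "addsub G'"
    unfolding addsub_def
  proof (intro conjI ballI)
    show "0 \<in> G'" unfolding G'_def using G p0 by (force simp: addsub_def image_iff)
  next
    fix u v assume "u \<in> G'" "v \<in> G'"
    then obtain g k g' k' where gk: "g \<in> G" "k < ?p" "u = g + of_nat k * x"
      and gk': "g' \<in> G" "k' < ?p" "v = g' + of_nat k' * x" unfolding G'_def by auto
    have "(of_nat (k + k') :: 'a) = of_nat ((k + k') mod ?p)"
      by (subst of_nat_eq_iff_cong_CHAR) (simp add: cong_def)
    hence "u + v = (g + g') + of_nat ((k + k') mod ?p) * x"
      using gk gk' by (metis (no_types, lifting) add.assoc add.left_commute distrib_right of_nat_add)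
    moreover have "g + g' \<in> G" using G gk gk' by (simp add: addsub_def)
    moreover have "(k + k') mod ?p < ?p" using p0 by simp
    ultimately show "u + v \<in> G'" unfolding G'_def by (auto simp: image_iff)
  qed
  have inj: "inj_on (\<lambda>(g,k). g + of_nat k * x) (G \<times> {..<?p})"
  proof -
    have main: "k = k'" if "g \<in> G" "g' \<in> G" "k < ?p" "k' < ?p" "k \<le> k'"
      "g + of_nat k * x = g' + of_nat k' * x" for g g' k k'
    proof (rule ccontr)
      assume "k \<noteq> k'"
      hence kk: "0 < k' - k" "k' - k < ?p" using that by auto
      have c0: "(of_nat (k' - k) :: 'a) \<noteq> 0"
        using kk by (subst of_nat_eq_0_iff_char_dvd) (auto dest: dvd_imp_le)
      have "of_nat (k' - k) * x = g - g'"
        using that by (simp add: of_nat_diff algebra_simps)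
      also have "g - g' \<in> G" using G that addsub_uminus[OF G, of g'] unfolding addsub_def by (metis diff_conv_add_uminus)
      finally have cx: "of_nat (k' - k) * x \<in> G" .
      obtain k'' where k'': "inverse (of_nat (k' - k) :: 'a) = of_nat k''"
        using of_nat_inverse_in_range[OF c0] by blast
      have "of_nat k'' * (of_nat (k' - k) * x) \<in> G" by (rule addsub_of_nat[OF G cx])
      also have "of_nat k'' * (of_nat (k' - k) * x) = x"
        using c0 by (simp flip: k'')
      finally show False using x by simp
    qed
    show ?thesis
    proof (rule inj_onI, clarify)
      fix g k g' k'
      assume h: "g \<in> G" "k < ?p" "g' \<in> G" "k' < ?p" "g + of_nat k * x = g' + of_nat k' * x"
      have "k = k'"
      proof (cases "k \<le> k'")
        case True thus ?thesis using main h by blast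
      next
        case False thus ?thesis using main[of g' g k' k] h by auto
      qed
      thus "g = g' \<and> k = k'" using h by simp
    qed
  qed
  show "card G' = card G * ?p"
    unfolding G'_def by (subst card_image[OF inj]) (simp add: card_cartesian_product)
qed

lemma ff_card_prime_power: "\<exists>e. card (UNIV :: 'a::{finite,field} set) = CHAR('a) ^ e"
proof -
  let ?p = "CHAR('a)"
  let ?S = "{G :: 'a set. addsub G \<and> (\<exists>e. card G = ?p ^ e)}"
  have fin: "finite ?S" by (rule finite_subset[OF subset_UNIV finite_UNIV])
  have "addsub {0::'a}" by (simp add: addsub_def)
  moreover have "card {0::'a} = ?p ^ 0" by simp
  ultimately have "{0} \<in> ?S" by blast
  hence ne: "?S \<noteq> {}" by blast
  obtain G where GS: "G \<in> ?S" and Gmax: "\<And>H. H \<in> ?S \<Longrightarrow> card H \<le> card G"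
  proof -
    let ?m = "Max (card ` ?S)"
    have fin': "finite (card ` ?S)" using fin by (rule finite_imageI)
    have ne': "card ` ?S \<noteq> {}" using ne by (simp only: image_is_empty) simp
    have "?m \<in> card ` ?S" by (rule Max_in[OF fin' ne'])
    then obtain G where G1: "G \<in> ?S" and G2: "?m = card G" by (rule imageE)
    have "card H \<le> card G" if "H \<in> ?S" for H
    proof -
      have "card H \<in> card ` ?S" using that by (rule imageI)
      hence "card H \<le> ?m" by (rule Max_ge[OF fin'])
      thus ?thesis using G2 by simp
    qed
    thus ?thesis using that G1 by blast
  qed
  have GG: "addsub G" using GS by (simp only: mem_Collect_eq)
  have "G = UNIV"
  proof (rule ccontr)
    assume "G \<noteq> UNIV"
    then obtain x where x: "x \<notin> G" by blast
    let ?G' = "(\<lambda>(g,k). g + of_nat k * x) ` (G \<times> {..<?p})"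
    have a: "addsub ?G'" by (rule addsub_extend(1)[OF GG x])
    have c: "card ?G' = card G * ?p" by (rule addsub_extend(2)[OF GG x])
    from GS obtain e where "card G = ?p ^ e" by (rule CollectE) (erule conjE exE)+
    hence "card ?G' = ?p ^ Suc e" using c by simp
    hence "?G' \<in> ?S" using a by (intro CollectI conjI exI)
    hence le: "card ?G' \<le> card G" by (rule Gmax)
    have "card G > 0"
    proof -
      have "0 \<in> G" using GG by (simp add: addsub_def)
      thus ?thesis by (auto simp: card_gt_0_iff)
    qed
    moreover have "?p \<ge> 2" using ff_prime_char[where 'a='a] prime_ge_2_nat by blast
    ultimately have "card G * 1 < card G * ?p" by (intro mult_strict_left_mono) auto
    thus False using c le by simp
  qed
  from GS obtain e where "card G = ?p ^ e" by (rule CollectE) (erule conjE exE)+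
  thus ?thesis using \<open>G = UNIV\<close> by blast
qed


section \<open>Trace and additive character\<close>

definition ffe :: "'a::{finite,field} itself \<Rightarrow> nat" where
  "ffe _ = (SOME e. card (UNIV :: 'a set) = CHAR('a) ^ e)"

lemma ffe: "card (UNIV :: 'a::{finite,field} set) = CHAR('a) ^ ffe TYPE('a)"
  unfolding ffe_def by (rule someI_ex[OF ff_card_prime_power])

lemma ffe_pos: "ffe TYPE('a::{finite,field}) > 0"
proof (rule ccontr)
  assume "\<not> ffe TYPE('a) > 0"
  hence "card (UNIV :: 'a set) = 1" using ffe[where 'a='a] by simp
  thus False using ff_card_ge2[where 'a='a] by simp
qed

definition tr :: "'a::{finite,field} \<Rightarrow> 'a" where
  "tr x = (\<Sum>k<ffe TYPE('a). x ^ (CHAR('a) ^ k))"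

lemma tr_add: "tr (x + y) = tr x + tr (y::'a::{finite,field})"
proof -
  have "(x + y) ^ (CHAR('a) ^ k) = x ^ (CHAR('a) ^ k) + y ^ (CHAR('a) ^ k)" for k
    by (rule freshmans_dream'[OF ff_prime_char]) simp
  thus ?thesis unfolding tr_def by (simp add: sum.distrib)
qed

lemma tr_pow_char: "tr x ^ CHAR('a) = tr (x::'a::{finite,field})"
proof -
  let ?p = "CHAR('a)" and ?e = "ffe TYPE('a)"
  have "tr x ^ ?p = (\<Sum>k<?e. (x ^ (?p ^ k)) ^ ?p)"
    unfolding tr_def by (rule freshmans_dream_sum[OF ff_prime_char]) simp
  also have "\<dots> = (\<Sum>k<?e. x ^ (?p ^ Suc k))" by (simp add: power_mult[symmetric] mult.commute)
  also have "\<dots> = (\<Sum>k<?e. x ^ (?p ^ k))"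
  proof -
    have "(\<Sum>k<Suc ?e. x ^ (?p ^ k)) = x ^ (?p ^ 0) + (\<Sum>k<?e. x ^ (?p ^ Suc k))"
      by (rule sum.lessThan_Suc_shift)
    moreover have "(\<Sum>k<Suc ?e. x ^ (?p ^ k)) = (\<Sum>k<?e. x ^ (?p ^ k)) + x ^ (?p ^ ?e)"
      by simp
    moreover have "x ^ (?p ^ ?e) = x" using ff_power_card[of x] ffe[where 'a='a] by simp
    ultimately show ?thesis by (simp add: add.commute)
  qed
  finally show ?thesis unfolding tr_def .
qed

lemma tr_nonzero: "\<exists>x::'a::{finite,field}. tr x \<noteq> 0"
proof (rule ccontr)
  assume "\<not> (\<exists>x::'a. tr x \<noteq> 0)"
  hence all: "\<And>x::'a. tr x = 0" by blast
  let ?p = "CHAR('a)" and ?e = "ffe TYPE('a)"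
  let ?T = "(\<Sum>k<?e. monom (1::'a) (?p ^ k))"
  have p2: "?p \<ge> 2" using ff_prime_char[where 'a='a] prime_ge_2_nat by blast
  have e: "?e > 0" by (rule ffe_pos)
  have inj: "?p ^ k = ?p ^ l \<longleftrightarrow> k = l" for k l using p2 by (simp add: power_inject_exp)
  have "coeff ?T (?p ^ (?e - 1)) = (\<Sum>k<?e. if ?p ^ k = ?p ^ (?e - 1) then 1 else 0)"
    by (simp add: coeff_sum coeff_monom)
  also have "\<dots> = (\<Sum>k\<in>{?e - 1}. 1)"
    by (rule sum.mono_neutral_cong_right) (use e inj in auto)
  finally have c: "coeff ?T (?p ^ (?e - 1)) \<noteq> 0" by simp
  have d: "degree ?T \<le> ?p ^ (?e - 1)"
  proof (rule degree_le, intro allI impI)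
    fix i assume i: "?p ^ (?e - 1) < i"
    have "?p ^ k \<noteq> i" if "k < ?e" for k
    proof -
      have "?p ^ k \<le> ?p ^ (?e - 1)" using that p2 by (intro power_increasing) auto
      thus ?thesis using i by linarith
    qed
    thus "coeff ?T i = 0" by (simp add: coeff_sum coeff_monom)
  qed
  have "card {x. poly ?T x = 0} \<le> ?p ^ (?e - 1)" by (rule card_roots_le[OF c d])
  moreover have "{x. poly ?T x = 0} = UNIV" using all by (auto simp: poly_sum poly_monom tr_def)
  moreover have "?p ^ (?e - 1) < ?p ^ ?e" using p2 e by (intro power_strict_increasing) auto
  ultimately show False using ffe[where 'a='a] by simp
qed

lemma of_nat_pow_char: "(of_nat k :: 'a::{finite,field}) ^ CHAR('a) = of_nat k"
proof (induction k)
  case 0 thus ?case using ff_prime_char[where 'a='a] prime_gt_0_nat by (simp add: power_0_left)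
next
  case (Suc k)
  have "(1 + of_nat k :: 'a) ^ CHAR('a) = 1 ^ CHAR('a) + of_nat k ^ CHAR('a)"
    by (rule freshmans_dream[OF ff_prime_char]) simp
  thus ?case using Suc by simp
qed

lemma pow_char_fixed:
  assumes "(y::'a::{finite,field}) ^ CHAR('a) = y"
  shows "\<exists>k<CHAR('a). y = of_nat k"
proof -
  let ?p = "CHAR('a)"
  have p2: "?p \<ge> 2" using ff_prime_char[where 'a='a] prime_ge_2_nat by blast
  let ?P = "monom (1::'a) ?p - monom 1 1"
  have c: "coeff ?P ?p \<noteq> 0" using p2 by (simp add: coeff_monom)
  have "degree (monom (1::'a) 1) \<le> ?p" using degree_monom_le[of "1::'a" 1] p2 by linarith
  moreover have "degree (monom (1::'a) ?p) \<le> ?p" by (rule degree_monom_le)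
  ultimately have d: "degree ?P \<le> ?p"
    by (intro order.trans[OF degree_diff_le_max]) simp
  have R: "{x. poly ?P x = 0} = {x::'a. x ^ ?p = x}" by (auto simp: poly_monom)
  have card1: "card {x::'a. x ^ ?p = x} \<le> ?p" using card_roots_le[OF c d] R by simp
  have sub: "of_nat ` {..<?p} \<subseteq> {x::'a. x ^ ?p = x}" using of_nat_pow_char by auto
  have injo: "inj_on (of_nat :: nat \<Rightarrow> 'a) {..<?p}"
  proof (rule inj_onI)
    fix k l assume "k \<in> {..<?p}" "l \<in> {..<?p}" "(of_nat k :: 'a) = of_nat l"
    thus "k = l" by (auto simp: of_nat_eq_iff_cong_CHAR dest: cong_less_modulus_unique_nat)
  qed
  have "card (of_nat ` {..<?p} :: 'a set) = ?p" using card_image[OF injo] by simp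
  moreover have "card (of_nat ` {..<?p} :: 'a set) \<le> card {x::'a. x ^ ?p = x}"
    by (rule card_mono[OF _ sub]) simp
  ultimately have "of_nat ` {..<?p} = {x::'a. x ^ ?p = x}"
    using card1 sub by (intro card_subset_eq) auto
  thus ?thesis using assms by auto
qed

definition nu :: "'a::{finite,field} \<Rightarrow> nat" where
  "nu y = (SOME k. k < CHAR('a) \<and> y = of_nat k)"

lemma nu_tr: "nu (tr x) < CHAR('a) \<and> tr x = of_nat (nu (tr (x::'a::{finite,field})))"
  unfolding nu_def by (rule someI_ex[OF pow_char_fixed[OF tr_pow_char]])

definition psi :: "'a::{finite,field} \<Rightarrow> complex" where
  "psi x = cis (2 * pi * real (nu (tr x)) / real CHAR('a))"

lemma cis_mod:
  assumes "p > 0"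
  shows "cis (2 * pi * real a / real p) = cis (2 * pi * real (a mod p) / real p)"
proof -
  have a: "a = p * (a div p) + a mod p" by simp
  have ra: "real a = real p * real (a div p) + real (a mod p)" using a by (metis of_nat_add of_nat_mult)
  have "2 * pi * real a / real p = 2 * pi * real (a div p) + 2 * pi * real (a mod p) / real p"
    using assms by (simp add: ra field_simps)
  hence "cis (2 * pi * real a / real p) = cis (2 * pi * real (a div p)) * cis (2 * pi * real (a mod p) / real p)"
    by (simp only: cis_mult)
  moreover have "cis (2 * pi * real (a div p)) = 1"
    by (rule cis_multiple_2pi) (simp add: Ints_of_nat)
  ultimately show ?thesis by simp
qed

lemma psi_add: "psi (x + y) = psi x * psi (y::'a::{finite,field})"
proof -
  let ?p = "CHAR('a)"
  have p0: "?p > 0" using ff_prime_char[where 'a='a] prime_gt_0_nat by blast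
  have "(of_nat (nu (tr (x + y))) :: 'a) = of_nat (nu (tr x) + nu (tr y))"
    using nu_tr[of "x+y"] nu_tr[of x] nu_tr[of y] tr_add[of x y] by simp
  hence "[nu (tr (x + y)) = nu (tr x) + nu (tr y)] (mod ?p)" by (metis of_nat_eq_iff_cong_CHAR)
  hence m: "nu (tr (x + y)) mod ?p = (nu (tr x) + nu (tr y)) mod ?p" by (simp add: cong_def)
  have "psi (x + y) = cis (2 * pi * real ((nu (tr x) + nu (tr y)) mod ?p) / real ?p)"
    unfolding psi_def using cis_mod[OF p0, of "nu (tr (x+y))"] m by simp
  also have "\<dots> = cis (2 * pi * real (nu (tr x) + nu (tr y)) / real ?p)"
    using cis_mod[OF p0] by simp
  also have "\<dots> = psi x * psi y" unfolding psi_def by (simp add: cis_mult add_divide_distrib distrib_left)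
  finally show ?thesis .
qed

lemma norm_psi [simp]: "norm (psi x) = 1"
  by (simp add: psi_def)

lemma psi_zero [simp]: "psi (0::'a::{finite,field}) = 1"
proof -
  have "psi (0::'a) = psi (0 + 0 :: 'a)" by simp
  also have "\<dots> = psi (0::'a) * psi (0::'a)" by (rule psi_add)
  finally have "psi (0::'a) * 1 = psi (0::'a) * psi (0::'a)" by simp
  moreover have "psi (0::'a) \<noteq> 0" by (simp add: psi_def)
  ultimately show ?thesis by (metis mult_left_cancel)
qed

lemma psi_minus: "psi (- x) = cnj (psi (x::'a::{finite,field}))"
proof -
  have "psi (- x) * psi x = 1" using psi_add[of "-x" x] by simp
  moreover have "psi x \<noteq> 0" by (simp add: psi_def)
  ultimately have "psi (- x) = inverse (psi x)" by (metis inverse_unique mult.commute)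
  also have "inverse (psi x) = cnj (psi x)" by (simp add: psi_def cis_cnj)
  finally show ?thesis .
qed

lemma psi_nontriv: "\<exists>x::'a::{finite,field}. psi x \<noteq> 1"
proof -
  let ?p = "CHAR('a)"
  have p0: "?p > 0" using ff_prime_char[where 'a='a] prime_gt_0_nat by blast
  obtain x :: 'a where x: "tr x \<noteq> 0" using tr_nonzero by blast
  let ?k = "nu (tr x)"
  have k: "?k < ?p" "tr x = of_nat ?k" using nu_tr[of x] by auto
  hence k0: "?k > 0" using x by (cases ?k) auto
  have "psi x \<noteq> 1"
  proof
    assume "psi x = 1"
    hence "cos (2 * pi * real ?k / real ?p) = 1" unfolding psi_def by (metis cis.sel(1) one_complex.sel(1))
    then obtain n :: int where n: "2 * pi * real ?k / real ?p = real_of_int n * 2 * pi"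
      by (auto simp: cos_one_2pi_int)
    hence "real ?k = real_of_int n * real ?p" using p0 by (simp add: field_simps)
    hence "int ?k = n * int ?p" by (metis of_int_eq_iff of_int_mult of_int_of_nat_eq)
    moreover have "0 < int ?k" "int ?k < int ?p" using k k0 by auto
    ultimately show False
    proof -
      assume h: "int ?k = n * int ?p" "0 < int ?k" "int ?k < int ?p"
      show False
      proof (cases "n \<ge> 1")
        case True
        hence "1 * int ?p \<le> n * int ?p" by (intro mult_right_mono) auto
        thus False using h by linarith
      next
        case False
        hence "n \<le> 0" by simp
        hence "n * int ?p \<le> 0" by (simp add: mult_nonpos_nonneg)
        thus False using h by simp
      qed
    qed
  qed
  thus ?thesis by blast
qed

lemma sum_psi:
  "(\<Sum>x\<in>UNIV. psi (a * x)) = (if a = 0 then of_nat (card (UNIV :: 'a set)) else 0 :: complex)"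
  for a :: "'a::{finite,field}"
proof (cases "a = 0")
  case True thus ?thesis by simp
next
  case False
  obtain x0 :: 'a where x0: "psi x0 \<noteq> 1" using psi_nontriv by blast
  have inj: "inj ((*) a)" using False by (auto intro: injI)
  have im: "range ((*) a) = UNIV"
  proof (rule surjI)
    fix y show "a * (y / a) = y" using False by simp
  qed
  have bij: "bij_betw ((*) a) UNIV UNIV" using inj im by (simp add: bij_betw_def)
  have re: "(\<Sum>x\<in>UNIV. psi (a * x)) = (\<Sum>y\<in>UNIV. psi (y::'a))"
    by (rule sum.reindex_bij_betw[OF bij])
  have "(\<Sum>y\<in>UNIV. psi (y::'a)) = (\<Sum>y\<in>UNIV. psi (x0 + y))"
    by (rule sum.reindex_bij_witness[of _ "\<lambda>y. x0 + y" "\<lambda>y. y - x0"]) auto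
  also have "\<dots> = psi x0 * (\<Sum>y\<in>UNIV. psi (y::'a))" by (simp add: psi_add sum_distrib_left)
  finally have "(1 - psi x0) * (\<Sum>y\<in>UNIV. psi (y::'a)) = 0" by (simp add: algebra_simps)
  hence "(\<Sum>y\<in>UNIV. psi (y::'a)) = 0" using x0 by simp
  thus ?thesis using re False by simp
qed



definition S :: "nat \<Rightarrow> 'a::{finite,field} \<Rightarrow> complex" where
  "S d u = (\<Sum>x\<in>UNIV-{0}. psi (u * x ^ d))"

lemma psi_sum: "finite A \<Longrightarrow> psi (\<Sum>j\<in>A. f j) = (\<Prod>j\<in>A. psi (f j :: 'a::{finite,field}))"
  by (induction A rule: finite_induct) (simp_all add: psi_add)

lemma sum_if_const: "finite A \<Longrightarrow> (\<Sum>y\<in>A. if P y then c else 0) = of_nat (card {y\<in>A. P y}) * (c::'b::comm_semiring_1)"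
  by (simp add: sum.If_cases[of A P] Int_def)

lemma S_zero: "S d (0::'a::{finite,field}) = of_nat (card (UNIV::'a set) - 1)"
  by (simp add: S_def card_Diff_singleton)

lemma S_mult:
  assumes "z \<noteq> 0"
  shows "S d (u * z ^ d) = S d (u::'a::{finite,field})"
proof -
  have bij: "bij_betw ((*) z) (UNIV - {0}) (UNIV - {0})"
  proof (rule bij_betwI[where g="\<lambda>y. y / z"])
  qed (use assms in auto)
  have "S d u = (\<Sum>x\<in>UNIV-{0}. psi (u * (z * x) ^ d))"
    unfolding S_def by (rule sum.reindex_bij_betw[OF bij, symmetric])
  also have "\<dots> = S d (u * z ^ d)" unfolding S_def by (simp add: power_mult_distrib mult_ac)
  finally show ?thesis by simp
qed

lemma sum_normS_eq:
  "(\<Sum>u\<in>UNIV. (cmod (S d (u::'a::{finite,field})))^2) =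
     real (card (UNIV::'a set)) * (\<Sum>x\<in>UNIV-{0::'a}. real (card {y\<in>UNIV-{0}. x ^ d = y ^ d}))"
proof -
  let ?q = "card (UNIV::'a set)"
  let ?X = "UNIV - {0::'a}"
  have "complex_of_real (\<Sum>u\<in>UNIV. (cmod (S d (u::'a)))^2) = (\<Sum>u\<in>UNIV. S d (u::'a) * cnj (S d u))"
    by (simp only: of_real_sum complex_norm_square)
  also have "\<dots> = (\<Sum>u\<in>UNIV. \<Sum>x\<in>?X. \<Sum>y\<in>?X. psi ((x ^ d - y ^ d) * (u::'a)))"
  proof (rule sum.cong[OF refl])
    fix u :: 'a
    have "S d u * cnj (S d u) = (\<Sum>x\<in>?X. psi (u * x ^ d)) * (\<Sum>y\<in>?X. psi (- (u * y ^ d)))"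
      by (simp add: S_def psi_minus)
    also have "\<dots> = (\<Sum>x\<in>?X. \<Sum>y\<in>?X. psi (u * x ^ d) * psi (- (u * y ^ d)))"
      by (simp add: sum_product)
    also have "\<dots> = (\<Sum>x\<in>?X. \<Sum>y\<in>?X. psi ((x ^ d - y ^ d) * u))"
    proof (intro sum.cong refl)
      fix x y :: 'a
      have "(x ^ d - y ^ d) * u = u * x ^ d + - (u * y ^ d)" by (simp add: algebra_simps)
      thus "psi (u * x ^ d) * psi (- (u * y ^ d)) = psi ((x ^ d - y ^ d) * u)" by (simp only: psi_add)
    qed
    finally show "S d u * cnj (S d u) = (\<Sum>x\<in>?X. \<Sum>y\<in>?X. psi ((x ^ d - y ^ d) * u))" .
  qed
  also have "\<dots> = (\<Sum>x\<in>?X. \<Sum>u\<in>UNIV. \<Sum>y\<in>?X. psi ((x ^ d - y ^ d) * (u::'a)))"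
    by (rule sum.swap)
  also have "\<dots> = (\<Sum>x\<in>?X. \<Sum>y\<in>?X. \<Sum>u\<in>UNIV. psi ((x ^ d - y ^ d) * (u::'a)))"
    by (rule sum.cong[OF refl]) (rule sum.swap)
  also have "\<dots> = (\<Sum>x\<in>?X. \<Sum>y\<in>?X. if x ^ d = y ^ d then of_nat ?q else 0)"
    by (simp add: sum_psi)
  also have "\<dots> = (\<Sum>x\<in>?X. of_nat (card {y\<in>?X. x ^ d = y ^ d}) * of_nat ?q)"
    by (simp add: sum_if_const)
  also have "\<dots> = complex_of_real (real ?q * (\<Sum>x\<in>?X. real (card {y\<in>?X. x ^ d = y ^ d})))"
    by (simp add: sum_distrib_left mult.commute)
  finally show ?thesis by (simp only: of_real_eq_iff)
qed

lemma sum_normS_le: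
  assumes "d \<ge> 1"
  shows "(\<Sum>u\<in>UNIV. (cmod (S d (u::'a::{finite,field})))^2) \<le> real (card (UNIV::'a set)) * real (card (UNIV::'a set) - 1) * real d"
proof -
  let ?X = "UNIV - {0::'a}"
  have "real (card {y\<in>?X. x ^ d = y ^ d}) \<le> real d" for x :: 'a
  proof -
    have "card {y\<in>?X. x ^ d = y ^ d} \<le> card {y. y ^ d = x ^ d}" by (rule card_mono) auto
    also have "\<dots> \<le> d" by (rule card_pow_eq_le[OF assms])
    finally show ?thesis by simp
  qed
  hence "(\<Sum>x\<in>?X. real (card {y\<in>?X. x ^ d = y ^ d})) \<le> (\<Sum>x\<in>?X. real d)"
    by (intro sum_mono) auto
  also have "\<dots> = real (card (UNIV::'a set) - 1) * real d" by (simp add: card_Diff_singleton)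
  finally show ?thesis unfolding sum_normS_eq
    by (simp add: mult.assoc mult_left_mono)
qed

lemma normS_le:
  assumes "d \<ge> 1" "u \<noteq> 0"
  shows "(cmod (S d (u::'a::{finite,field})))^2 \<le> real (card (UNIV::'a set)) * real d ^ 2"
proof -
  let ?q = "card (UNIV::'a set)"
  let ?X = "UNIV - {0::'a}"
  let ?C = "(\<lambda>z. u * z ^ d) ` ?X"
  have cardX: "card ?X \<le> card ?C * d"
  proof -
    have "?X \<subseteq> (\<Union>v\<in>?C. {z. z ^ d = v / u})" using assms(2) by auto
    hence "card ?X \<le> card (\<Union>v\<in>?C. {z. z ^ d = v / u})" by (intro card_mono) auto
    also have "\<dots> \<le> (\<Sum>v\<in>?C. card {z. z ^ d = v / u})" by (rule card_UN_le) simp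
    also have "\<dots> \<le> (\<Sum>v\<in>?C. d)" by (intro sum_mono card_pow_eq_le[OF assms(1)])
    also have "\<dots> = card ?C * d" by simp
    finally show ?thesis .
  qed
  have eq: "(cmod (S d v))^2 = (cmod (S d u))^2" if "v \<in> ?C" for v
  proof -
    from that obtain z where z: "v = u * z ^ d" "z \<in> ?X" by (rule imageE)
    hence "z \<noteq> 0" by simp
    thus ?thesis using S_mult[of z d u] z(1) by simp
  qed
  have "(\<Sum>v\<in>?C. (cmod (S d v))^2) = (\<Sum>v\<in>?C. (cmod (S d u))^2)"
    by (rule sum.cong[OF refl eq])
  hence "real (card ?C) * (cmod (S d u))^2 = (\<Sum>v\<in>?C. (cmod (S d v))^2)"
    by simp
  also have "\<dots> \<le> (\<Sum>v\<in>UNIV. (cmod (S d (v::'a)))^2)" by (intro sum_mono2) auto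
  also have "\<dots> \<le> real ?q * real (?q - 1) * real d" by (rule sum_normS_le[OF assms(1)])
  finally have A: "real (card ?C) * (cmod (S d u))^2 \<le> real ?q * real (?q - 1) * real d" .
  have "real (?q - 1) \<le> real (card ?C) * real d" using cardX by (simp add: card_Diff_singleton flip: of_nat_mult)
  hence "real ?q * real (?q - 1) * real d \<le> real ?q * (real (card ?C) * real d) * real d"
    by (intro mult_right_mono mult_left_mono) auto
  hence B: "real (card ?C) * (cmod (S d u))^2 \<le> real (card ?C) * (real ?q * real d ^ 2)"
    using A by (simp add: power2_eq_square mult_ac)
  have "card ?X > 0" using ff_card_ge2[where 'a='a] by (simp add: card_Diff_singleton)
  hence "card ?C > 0" using cardX by (cases "card ?C") auto
  thus ?thesis using B by (simp add: mult_le_cancel_left_pos)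
qed



definition Vn :: "nat \<Rightarrow> (nat \<Rightarrow> 'a::{finite,field}) set" where
  "Vn n = PiE {1..n} (\<lambda>_. UNIV)"

definition dotc :: "nat \<Rightarrow> (nat \<Rightarrow> nat \<Rightarrow> 'a::{finite,field}) \<Rightarrow> (nat \<Rightarrow> 'a) \<Rightarrow> nat \<Rightarrow> 'a" where
  "dotc n A \<xi> i = (\<Sum>j=1..n. \<xi> j * A j i)"

definition Ncount :: "nat \<Rightarrow> nat set \<Rightarrow> (nat \<Rightarrow> nat \<Rightarrow> 'a::{finite,field}) \<Rightarrow> (nat \<Rightarrow> nat) \<Rightarrow> (nat \<Rightarrow> 'a) \<Rightarrow> nat" where
  "Ncount n I A d w = card {y \<in> PiE I (\<lambda>_. UNIV - {0}). \<forall>j\<in>{1..n}. (\<Sum>i\<in>I. A j i * y i ^ d i) = w j}"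

lemma finite_Vn [simp]: "finite (Vn n)"
  by (simp add: Vn_def finite_PiE)

lemma card_Vn: "card (Vn n :: (nat \<Rightarrow> 'a::{finite,field}) set) = card (UNIV :: 'a set) ^ n"
  by (simp add: Vn_def card_PiE)

lemma ortho_V:
  "(\<Sum>\<xi>\<in>Vn n. psi (\<Sum>j=1..n. \<xi> j * z j)) =
     (if \<forall>j\<in>{1..n}. z j = 0 then of_nat (card (UNIV :: 'a set) ^ n) else (0::complex))"
  for z :: "nat \<Rightarrow> 'a::{finite,field}"
proof -
  have "(\<Sum>\<xi>\<in>Vn n. psi (\<Sum>j=1..n. \<xi> j * z j)) = (\<Sum>\<xi>\<in>Vn n. \<Prod>j=1..n. psi (\<xi> j * z j))"
    by (simp add: psi_sum)
  also have "\<dots> = (\<Prod>j=1..n. \<Sum>x\<in>(UNIV::'a set). psi (x * z j))"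
    unfolding Vn_def by (rule prod_sum_PiE[symmetric]) auto
  also have "\<dots> = (\<Prod>j=1..n. if z j = 0 then of_nat (card (UNIV :: 'a set)) else 0)"
    by (intro prod.cong refl) (simp add: mult.commute[of _ "z _"] sum_psi)
  also have "\<dots> = (if \<forall>j\<in>{1..n}. z j = 0 then of_nat (card (UNIV :: 'a set) ^ n) else 0)"
  proof (cases "\<forall>j\<in>{1..n}. z j = 0")
    case True thus ?thesis by simp
  next
    case False
    then obtain j where "j \<in> {1..n}" "z j \<noteq> 0" by blast
    hence "(\<Prod>j=1..n. if z j = 0 then of_nat (card (UNIV :: 'a set)) else (0::complex)) = 0"
      by (subst prod_zero_iff) auto
    thus ?thesis using False by simp
  qed
  finally show ?thesis .
qed

lemma fourier_N:
  fixes A :: "nat \<Rightarrow> nat \<Rightarrow> 'a::{finite,field}"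
  assumes I: "finite I"
  shows "of_nat (card (UNIV :: 'a set) ^ n) * of_nat (Ncount n I A d w) =
    (\<Sum>\<xi>\<in>Vn n. psi (- (\<Sum>j=1..n. \<xi> j * w j)) * (\<Prod>i\<in>I. S (d i) (dotc n A \<xi> i)))"
proof -
  let ?q = "card (UNIV :: 'a set)"
  let ?Y = "PiE I (\<lambda>_. UNIV - {0::'a})"
  let ?z = "\<lambda>y j. (\<Sum>i\<in>I. A j i * y i ^ d i) - w j"
  have fY: "finite ?Y" using I by (simp add: finite_PiE)
  have key: "psi (- (\<Sum>j=1..n. \<xi> j * w j)) * (\<Prod>i\<in>I. S (d i) (dotc n A \<xi> i)) =
      (\<Sum>y\<in>?Y. psi (\<Sum>j=1..n. \<xi> j * ?z y j))" for \<xi>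
  proof -
    have "(\<Prod>i\<in>I. S (d i) (dotc n A \<xi> i)) = (\<Prod>i\<in>I. \<Sum>x\<in>UNIV - {0}. psi (dotc n A \<xi> i * x ^ d i))"
      by (simp add: S_def)
    also have "\<dots> = (\<Sum>y\<in>?Y. \<Prod>i\<in>I. psi (dotc n A \<xi> i * y i ^ d i))"
      by (rule prod_sum_PiE) (use I in auto)
    finally have "psi (- (\<Sum>j=1..n. \<xi> j * w j)) * (\<Prod>i\<in>I. S (d i) (dotc n A \<xi> i)) =
       (\<Sum>y\<in>?Y. psi (- (\<Sum>j=1..n. \<xi> j * w j)) * (\<Prod>i\<in>I. psi (dotc n A \<xi> i * y i ^ d i)))"
      by (simp add: sum_distrib_left)
    also have "\<dots> = (\<Sum>y\<in>?Y. psi (\<Sum>j=1..n. \<xi> j * ?z y j))"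
    proof (rule sum.cong[OF refl])
      fix y
      have "(\<Sum>j=1..n. \<xi> j * ?z y j) = (\<Sum>i\<in>I. dotc n A \<xi> i * y i ^ d i) + - (\<Sum>j=1..n. \<xi> j * w j)"
      proof -
        have "(\<Sum>j=1..n. \<xi> j * ?z y j) = (\<Sum>j=1..n. \<Sum>i\<in>I. \<xi> j * (A j i * y i ^ d i)) - (\<Sum>j=1..n. \<xi> j * w j)"
          by (simp add: right_diff_distrib sum_distrib_left sum_subtractf)
        also have "(\<Sum>j=1..n. \<Sum>i\<in>I. \<xi> j * (A j i * y i ^ d i)) = (\<Sum>i\<in>I. \<Sum>j=1..n. \<xi> j * (A j i * y i ^ d i))"
          by (rule sum.swap)
        also have "\<dots> = (\<Sum>i\<in>I. dotc n A \<xi> i * y i ^ d i)"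
          by (simp add: dotc_def sum_distrib_right mult.assoc)
        finally show ?thesis by simp
      qed
      hence "psi (\<Sum>j=1..n. \<xi> j * ?z y j) = psi (\<Sum>i\<in>I. dotc n A \<xi> i * y i ^ d i) * psi (- (\<Sum>j=1..n. \<xi> j * w j))"
        by (simp only: psi_add)
      also have "\<dots> = psi (- (\<Sum>j=1..n. \<xi> j * w j)) * (\<Prod>i\<in>I. psi (dotc n A \<xi> i * y i ^ d i))"
        using I by (simp add: psi_sum mult.commute)
      finally show "psi (- (\<Sum>j=1..n. \<xi> j * w j)) * (\<Prod>i\<in>I. psi (dotc n A \<xi> i * y i ^ d i)) =
          psi (\<Sum>j=1..n. \<xi> j * ?z y j)" by simp
    qed
    finally show ?thesis .
  qed
  have "(\<Sum>\<xi>\<in>Vn n. psi (- (\<Sum>j=1..n. \<xi> j * w j)) * (\<Prod>i\<in>I. S (d i) (dotc n A \<xi> i))) =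
        (\<Sum>\<xi>\<in>Vn n. \<Sum>y\<in>?Y. psi (\<Sum>j=1..n. \<xi> j * ?z y j))"
    by (rule sum.cong[OF refl key])
  also have "\<dots> = (\<Sum>y\<in>?Y. \<Sum>\<xi>\<in>Vn n. psi (\<Sum>j=1..n. \<xi> j * ?z y j))"
    by (rule sum.swap)
  also have "\<dots> = (\<Sum>y\<in>?Y. if \<forall>j\<in>{1..n}. ?z y j = 0 then of_nat (?q ^ n) else 0)"
    by (rule sum.cong[OF refl]) (rule ortho_V)
  also have "\<dots> = of_nat (card {y\<in>?Y. \<forall>j\<in>{1..n}. ?z y j = 0}) * of_nat (?q ^ n)"
    by (rule sum_if_const[OF fY])
  also have "{y\<in>?Y. \<forall>j\<in>{1..n}. ?z y j = 0} = {y\<in>?Y. \<forall>j\<in>{1..n}. (\<Sum>i\<in>I. A j i * y i ^ d i) = w j}"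
    by simp
  finally show ?thesis unfolding Ncount_def by (simp add: mult.commute)
qed

lemma parseval:
  fixes c :: "(nat \<Rightarrow> 'a::{finite,field}) \<Rightarrow> complex"
  assumes U: "U \<subseteq> Vn n"
  shows "(\<Sum>w\<in>Vn n. (cmod (\<Sum>\<xi>\<in>U. psi (- (\<Sum>j=1..n. \<xi> j * w j)) * c \<xi>))^2) =
         real (card (UNIV :: 'a set) ^ n) * (\<Sum>\<xi>\<in>U. (cmod (c \<xi>))^2)"
proof -
  let ?q = "card (UNIV :: 'a set)"
  let ?E = "\<lambda>w. (\<Sum>\<xi>\<in>U. psi (- (\<Sum>j=1..n. \<xi> j * w j)) * c \<xi>)"
  have fU: "finite U" by (rule finite_subset[OF U finite_Vn])
  have "complex_of_real (\<Sum>w\<in>Vn n. (cmod (?E w))^2) = (\<Sum>w\<in>Vn n. ?E w * cnj (?E w))"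
    by (simp only: of_real_sum complex_norm_square)
  also have "\<dots> = (\<Sum>w\<in>Vn n. \<Sum>\<xi>\<in>U. \<Sum>\<eta>\<in>U. c \<xi> * cnj (c \<eta>) * psi (\<Sum>j=1..n. w j * (\<eta> j - \<xi> j)))"
  proof (rule sum.cong[OF refl])
    fix w :: "nat \<Rightarrow> 'a"
    have "?E w * cnj (?E w) = (\<Sum>\<xi>\<in>U. psi (- (\<Sum>j=1..n. \<xi> j * w j)) * c \<xi>) *
            (\<Sum>\<eta>\<in>U. psi (\<Sum>j=1..n. \<eta> j * w j) * cnj (c \<eta>))"
    proof -
      have "cnj (?E w) = (\<Sum>\<eta>\<in>U. psi (\<Sum>j=1..n. \<eta> j * w j) * cnj (c \<eta>))"
        by (simp only: cnj_sum complex_cnj_mult psi_minus complex_cnj_cnj)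
      thus ?thesis by simp
    qed
    also have "\<dots> = (\<Sum>\<xi>\<in>U. \<Sum>\<eta>\<in>U. (psi (- (\<Sum>j=1..n. \<xi> j * w j)) * c \<xi>) * (psi (\<Sum>j=1..n. \<eta> j * w j) * cnj (c \<eta>)))"
      by (rule sum_product)
    also have "\<dots> = (\<Sum>\<xi>\<in>U. \<Sum>\<eta>\<in>U. c \<xi> * cnj (c \<eta>) * psi (\<Sum>j=1..n. w j * (\<eta> j - \<xi> j)))"
    proof (intro sum.cong refl)
      fix \<xi> \<eta> :: "nat \<Rightarrow> 'a"
      have "(\<Sum>j=1..n. w j * (\<eta> j - \<xi> j)) = - (\<Sum>j=1..n. \<xi> j * w j) + (\<Sum>j=1..n. \<eta> j * w j)"
        by (simp add: right_diff_distrib sum_subtractf mult.commute)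
      hence "psi (\<Sum>j=1..n. w j * (\<eta> j - \<xi> j)) = psi (- (\<Sum>j=1..n. \<xi> j * w j)) * psi (\<Sum>j=1..n. \<eta> j * w j)"
        by (simp only: psi_add)
      thus "(psi (- (\<Sum>j=1..n. \<xi> j * w j)) * c \<xi>) * (psi (\<Sum>j=1..n. \<eta> j * w j) * cnj (c \<eta>)) =
          c \<xi> * cnj (c \<eta>) * psi (\<Sum>j=1..n. w j * (\<eta> j - \<xi> j))" by (simp add: mult_ac)
    qed
    finally show "?E w * cnj (?E w) = (\<Sum>\<xi>\<in>U. \<Sum>\<eta>\<in>U. c \<xi> * cnj (c \<eta>) * psi (\<Sum>j=1..n. w j * (\<eta> j - \<xi> j)))" .
  qed
  also have "\<dots> = (\<Sum>\<xi>\<in>U. \<Sum>w\<in>Vn n. \<Sum>\<eta>\<in>U. c \<xi> * cnj (c \<eta>) * psi (\<Sum>j=1..n. w j * (\<eta> j - \<xi> j)))"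
    by (rule sum.swap)
  also have "\<dots> = (\<Sum>\<xi>\<in>U. \<Sum>\<eta>\<in>U. \<Sum>w\<in>Vn n. c \<xi> * cnj (c \<eta>) * psi (\<Sum>j=1..n. w j * (\<eta> j - \<xi> j)))"
    by (rule sum.cong[OF refl]) (rule sum.swap)
  also have "\<dots> = (\<Sum>\<xi>\<in>U. \<Sum>\<eta>\<in>U. c \<xi> * cnj (c \<eta>) * (if \<eta> = \<xi> then of_nat (?q ^ n) else 0))"
  proof (intro sum.cong refl)
    fix \<xi> \<eta> assume "\<xi> \<in> U" "\<eta> \<in> U"
    hence m: "\<xi> \<in> Vn n" "\<eta> \<in> Vn n" using U by auto
    have eq: "(\<forall>j\<in>{1..n}. \<eta> j - \<xi> j = 0) \<longleftrightarrow> \<eta> = \<xi>"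
    proof
      assume "\<forall>j\<in>{1..n}. \<eta> j - \<xi> j = 0"
      thus "\<eta> = \<xi>" using m unfolding Vn_def by (intro PiE_ext[of _ "{1..n}" "\<lambda>_. UNIV"]) auto
    qed simp
    have "(\<Sum>w\<in>Vn n. c \<xi> * cnj (c \<eta>) * psi (\<Sum>j=1..n. w j * (\<eta> j - \<xi> j))) =
          c \<xi> * cnj (c \<eta>) * (\<Sum>w\<in>Vn n. psi (\<Sum>j=1..n. w j * (\<eta> j - \<xi> j)))"
      by (simp add: sum_distrib_left)
    also have "(\<Sum>w\<in>Vn n. psi (\<Sum>j=1..n. w j * (\<eta> j - \<xi> j))) = (if \<eta> = \<xi> then of_nat (?q ^ n) else 0)"
      by (subst ortho_V) (simp only: eq)
    finally show "(\<Sum>w\<in>Vn n. c \<xi> * cnj (c \<eta>) * psi (\<Sum>j=1..n. w j * (\<eta> j - \<xi> j))) =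
          c \<xi> * cnj (c \<eta>) * (if \<eta> = \<xi> then of_nat (?q ^ n) else 0)" .
  qed
  also have "\<dots> = (\<Sum>\<xi>\<in>U. c \<xi> * cnj (c \<xi>) * of_nat (?q ^ n))"
  proof (rule sum.cong[OF refl])
    fix \<xi> assume "\<xi> \<in> U"
    have "(\<Sum>\<eta>\<in>U. c \<xi> * cnj (c \<eta>) * (if \<eta> = \<xi> then of_nat (?q ^ n) else 0)) =
          (\<Sum>\<eta>\<in>U. if \<eta> = \<xi> then c \<xi> * cnj (c \<eta>) * of_nat (?q ^ n) else 0)"
      by (intro sum.cong refl) simp
    also have "\<dots> = c \<xi> * cnj (c \<xi>) * of_nat (?q ^ n)"
      using \<open>\<xi> \<in> U\<close> fU by (simp add: sum.delta')
    finally show "(\<Sum>\<eta>\<in>U. c \<xi> * cnj (c \<eta>) * (if \<eta> = \<xi> then of_nat (?q ^ n) else 0)) =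
          c \<xi> * cnj (c \<xi>) * of_nat (?q ^ n)" .
  qed
  also have "\<dots> = of_nat (?q ^ n) * (\<Sum>\<xi>\<in>U. c \<xi> * cnj (c \<xi>))"
    by (simp add: sum_distrib_left mult_ac)
  also have "\<dots> = complex_of_real (real (?q ^ n) * (\<Sum>\<xi>\<in>U. (cmod (c \<xi>))^2))"
    by (simp only: of_real_mult of_real_sum complex_norm_square of_real_of_nat_eq)
  finally show ?thesis by (simp only: of_real_eq_iff)
qed

definition zerov :: "nat \<Rightarrow> nat \<Rightarrow> 'a::{finite,field}" where
  "zerov n = restrict (\<lambda>_. 0) {1..n}"

lemma zerov_in [simp]: "zerov n \<in> Vn n"
  by (simp add: zerov_def Vn_def)

lemma dotc_zerov [simp]: "dotc n A (zerov n) i = 0"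
  by (simp add: dotc_def zerov_def)

lemma bad_bound:
  fixes A :: "nat \<Rightarrow> nat \<Rightarrow> 'a::{finite,field}" and n :: nat and d :: "nat \<Rightarrow> nat"
  assumes I: "finite I"
  defines "P \<equiv> \<lambda>\<xi>. (\<Prod>i\<in>I. S (d i) (dotc n A \<xi> i))"
  shows "real (card {w\<in>Vn n. Ncount n I A d w = 0}) * real (card (UNIV::'a set) - 1) ^ (2 * card I)
     \<le> real (card (UNIV :: 'a set) ^ n) * (\<Sum>\<xi>\<in>Vn n - {zerov n}. (cmod (P \<xi>))^2)"
proof -
  let ?q = "card (UNIV :: 'a set)"
  let ?U = "Vn n - {zerov n} :: (nat \<Rightarrow> 'a) set"
  let ?E = "\<lambda>w. (\<Sum>\<xi>\<in>?U. psi (- (\<Sum>j=1..n. \<xi> j * w j)) * P \<xi>)"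
  let ?B = "{w\<in>Vn n. Ncount n I A d w = 0}"
  have P0: "P (zerov n) = of_nat (?q - 1) ^ card I"
    unfolding P_def by (simp add: S_zero)
  have split: "of_nat (?q ^ n) * of_nat (Ncount n I A d w) = of_nat (?q - 1) ^ card I + ?E w" for w
  proof -
    have "of_nat (?q ^ n) * of_nat (Ncount n I A d w) =
        (\<Sum>\<xi>\<in>Vn n. psi (- (\<Sum>j=1..n. \<xi> j * w j)) * P \<xi>)"
      unfolding P_def by (rule fourier_N[OF I])
    also have "\<dots> = psi (- (\<Sum>j=1..n. zerov n j * w j)) * P (zerov n) + ?E w"
      by (subst sum.remove[of _ "zerov n"]) auto
    also have "psi (- (\<Sum>j=1..n. zerov n j * w j)) = 1" by (simp add: zerov_def)
    finally show ?thesis using P0 by simp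
  qed
  have Ew: "(cmod (?E w))^2 = real (?q - 1) ^ (2 * card I)" if "w \<in> ?B" for w
  proof -
    have "?E w = - (of_nat (?q - 1) ^ card I)" using split[of w] that by (simp add: eq_neg_iff_add_eq_0 add.commute)
    hence "cmod (?E w) = real (?q - 1) ^ card I" by (simp add: norm_power)
    thus ?thesis by (simp add: power_mult[symmetric] mult.commute)
  qed
  have "real (card ?B) * real (?q - 1) ^ (2 * card I) = (\<Sum>w\<in>?B. (cmod (?E w))^2)"
    using Ew by simp
  also have "\<dots> \<le> (\<Sum>w\<in>Vn n. (cmod (?E w))^2)" by (intro sum_mono2) auto
  also have "\<dots> = real (?q ^ n) * (\<Sum>\<xi>\<in>?U. (cmod (P \<xi>))^2)" by (rule parseval) auto
  finally show ?thesis .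
qed



lemma sumP_bound:
  fixes A :: "nat \<Rightarrow> nat \<Rightarrow> 'a::{finite,field}" and n :: nat and d :: "nat \<Rightarrow> nat" and dm :: nat
  assumes I: "finite I" and nI: "n \<le> card I"
    and dI: "\<And>i. i \<in> I \<Longrightarrow> 1 \<le> d i \<and> d i \<le> dm"
    and H1: "\<And>\<xi>. \<xi> \<in> Vn n - {zerov n} \<Longrightarrow> card {i\<in>I. dotc n A \<xi> i = 0} < n"
    and H2: "\<And>J. J \<subseteq> I \<Longrightarrow> card J = n \<Longrightarrow>
               bij_betw (\<lambda>\<xi>. restrict (dotc n A \<xi>) J) (Vn n) (PiE J (\<lambda>_. UNIV))"
  shows "(\<Sum>\<xi>\<in>Vn n - {zerov n}. (cmod (\<Prod>i\<in>I. S (d i) (dotc n A \<xi> i)))^2)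
     \<le> (real (card (UNIV::'a set)) * real dm ^ 2) ^ (card I - n) * real (card I choose n)
        * (real (card (UNIV::'a set)) * real (card (UNIV::'a set) - 1) * real dm) ^ n"
proof -
  let ?q = "card (UNIV::'a set)"
  let ?D = "\<lambda>i u. (cmod (S (d i) (u::'a)))^2"
  let ?J = "{J. J \<subseteq> I \<and> card J = n}"
  let ?c = "(real ?q * real dm ^ 2) ^ (card I - n)"
  let ?G = "\<lambda>\<xi>. (\<Sum>J\<in>?J. \<Prod>j\<in>J. ?D j (dotc n A \<xi> j))"
  have fJ: "finite ?J"
  proof (rule finite_subset[of _ "Pow I"])
    show "?J \<subseteq> Pow I" by blast
  qed (use I in simp)
  have D0: "?D i u \<ge> 0" for i u by simp
  have normP: "(cmod (\<Prod>i\<in>I. S (d i) (dotc n A \<xi> i)))^2 = (\<Prod>i\<in>I. ?D i (dotc n A \<xi> i))" for \<xi>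
    by (simp add: prod_norm[symmetric] prod_power_distrib)
  have pt: "(\<Prod>i\<in>I. ?D i (dotc n A \<xi> i)) \<le> ?c * ?G \<xi>" if \<xi>: "\<xi> \<in> Vn n - {zerov n}" for \<xi>
  proof -
    let ?Z = "{i\<in>I. dotc n A \<xi> i = 0}"
    have Zn: "card ?Z < n" by (rule H1[OF \<xi>])
    have fZ: "finite ?Z" using I by simp
    have cIZ: "card (I - ?Z) = card I - card ?Z" using I by (intro card_Diff_subset) auto
    have "n - card ?Z \<le> card (I - ?Z)" using cIZ nI by linarith
    then obtain K where K: "K \<subseteq> I - ?Z" "card K = n - card ?Z" "finite K"
      by (rule obtain_subset_with_card_n)
    let ?JJ = "?Z \<union> K"
    have JJI: "?JJ \<subseteq> I" using K by auto
    have cJJ: "card ?JJ = n"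
    proof -
      have "?Z \<inter> K = {}" using K by auto
      hence "card ?JJ = card ?Z + card K" using fZ K by (simp add: card_Un_disjoint)
      thus ?thesis using K Zn by simp
    qed
    have JJin: "?JJ \<in> ?J" using JJI cJJ by blast
    have "(\<Prod>i\<in>I. ?D i (dotc n A \<xi> i)) = (\<Prod>i\<in>I - ?JJ. ?D i (dotc n A \<xi> i)) * (\<Prod>j\<in>?JJ. ?D j (dotc n A \<xi> j))"
      by (rule prod.subset_diff[OF JJI I])
    also have "\<dots> \<le> ?c * (\<Prod>j\<in>?JJ. ?D j (dotc n A \<xi> j))"
    proof (rule mult_right_mono)
      have "(\<Prod>i\<in>I - ?JJ. ?D i (dotc n A \<xi> i)) \<le> (\<Prod>i\<in>I - ?JJ. real ?q * real dm ^ 2)"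
      proof (rule prod_mono, rule conjI)
        fix i assume i: "i \<in> I - ?JJ"
        show "0 \<le> ?D i (dotc n A \<xi> i)" by simp
        have nz: "dotc n A \<xi> i \<noteq> 0" using i by auto
        have "?D i (dotc n A \<xi> i) \<le> real ?q * real (d i) ^ 2"
          by (rule normS_le) (use dI[of i] i nz in auto)
        also have "\<dots> \<le> real ?q * real dm ^ 2"
          using dI[of i] i by (intro mult_left_mono power_mono) auto
        finally show "?D i (dotc n A \<xi> i) \<le> real ?q * real dm ^ 2" .
      qed
      also have "\<dots> = ?c"
      proof -
        have "card (I - ?JJ) = card I - n" using I JJI cJJ by (simp add: card_Diff_subset finite_subset)
        thus ?thesis by simp
      qed
      finally show "(\<Prod>i\<in>I - ?JJ. ?D i (dotc n A \<xi> i)) \<le> ?c" .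
    qed (simp add: prod_nonneg)
    also have "\<dots> \<le> ?c * ?G \<xi>"
    proof (rule mult_left_mono)
      show "(\<Prod>j\<in>?JJ. ?D j (dotc n A \<xi> j)) \<le> ?G \<xi>"
        by (rule member_le_sum[OF JJin _ fJ, of "\<lambda>J. \<Prod>j\<in>J. ?D j (dotc n A \<xi> j)"]) (simp add: prod_nonneg)
    qed simp
    finally show ?thesis .
  qed
  have inner: "(\<Sum>\<xi>\<in>Vn n. \<Prod>j\<in>J. ?D j (dotc n A \<xi> j)) \<le> (real ?q * real (?q - 1) * real dm) ^ n"
    if J: "J \<in> ?J" for J
  proof -
    have JI: "J \<subseteq> I" and cJ: "card J = n" using J by auto
    have fJ': "finite J" using I JI finite_subset by blast
    have bij: "bij_betw (\<lambda>\<xi>. restrict (dotc n A \<xi>) J) (Vn n) (PiE J (\<lambda>_. UNIV))" by (rule H2[OF JI cJ])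
    have "(\<Sum>\<xi>\<in>Vn n. \<Prod>j\<in>J. ?D j (dotc n A \<xi> j)) =
          (\<Sum>\<xi>\<in>Vn n. (\<lambda>u. \<Prod>j\<in>J. ?D j (u j)) (restrict (dotc n A \<xi>) J))"
      by (intro sum.cong refl prod.cong) auto
    also have "\<dots> = (\<Sum>u\<in>PiE J (\<lambda>_. UNIV). \<Prod>j\<in>J. ?D j (u j))"
      by (rule sum.reindex_bij_betw[OF bij])
    also have "\<dots> = (\<Prod>j\<in>J. \<Sum>x\<in>UNIV. ?D j x)"
      by (rule prod_sum_PiE[symmetric]) (use fJ' in auto)
    also have "\<dots> \<le> (\<Prod>j\<in>J. real ?q * real (?q - 1) * real dm)"
    proof (rule prod_mono, rule conjI)
      fix j assume j: "j \<in> J"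
      show "0 \<le> (\<Sum>x\<in>UNIV. ?D j x)" by (simp add: sum_nonneg)
      have "(\<Sum>x\<in>UNIV. ?D j x) \<le> real ?q * real (?q - 1) * real (d j)"
        by (rule sum_normS_le) (use dI[of j] j JI in auto)
      also have "\<dots> \<le> real ?q * real (?q - 1) * real dm"
        using dI[of j] j JI by (intro mult_left_mono) auto
      finally show "(\<Sum>x\<in>UNIV. ?D j x) \<le> real ?q * real (?q - 1) * real dm" .
    qed
    also have "\<dots> = (real ?q * real (?q - 1) * real dm) ^ n" using cJ by simp
    finally show ?thesis .
  qed
  have "(\<Sum>\<xi>\<in>Vn n - {zerov n}. (cmod (\<Prod>i\<in>I. S (d i) (dotc n A \<xi> i)))^2)
      = (\<Sum>\<xi>\<in>Vn n - {zerov n}. \<Prod>i\<in>I. ?D i (dotc n A \<xi> i))"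
    by (simp only: normP)
  also have "\<dots> \<le> (\<Sum>\<xi>\<in>Vn n - {zerov n}. ?c * ?G \<xi>)"
    by (rule sum_mono) (rule pt)
  also have "\<dots> \<le> (\<Sum>\<xi>\<in>Vn n. ?c * ?G \<xi>)"
    by (rule sum_mono2) (auto intro!: mult_nonneg_nonneg sum_nonneg prod_nonneg)
  also have "\<dots> = ?c * (\<Sum>J\<in>?J. \<Sum>\<xi>\<in>Vn n. \<Prod>j\<in>J. ?D j (dotc n A \<xi> j))"
    by (simp add: sum_distrib_left sum.swap[of _ "Vn n"])
  also have "\<dots> \<le> ?c * (\<Sum>J\<in>?J. (real ?q * real (?q - 1) * real dm) ^ n)"
    by (intro mult_left_mono sum_mono inner) auto
  also have "\<dots> = ?c * real (card I choose n) * (real ?q * real (?q - 1) * real dm) ^ n"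
    using n_subsets[OF I, of n] by simp
  finally show ?thesis .
qed



definition mon :: "nat \<Rightarrow> (nat \<Rightarrow> nat) \<Rightarrow> (nat \<Rightarrow> 'a::comm_ring_1) \<Rightarrow> 'a" where
  "mon n \<alpha> x = (\<Prod>i=1..n. x i ^ \<alpha> i)"

lemma mon_add: "mon n (\<lambda>i. a i + b i) x = mon n a x * mon n b x"
  by (simp add: mon_def power_add prod.distrib)

lemma mon_upd:
  assumes "k \<in> {1..n}" "m \<le> \<alpha> k"
  shows "mon n \<alpha> x = mon n (\<alpha>(k := \<alpha> k - m)) x * x k ^ m"
proof -
  have "mon n \<alpha> x = (\<Prod>i=1..n. x i ^ (\<alpha>(k := \<alpha> k - m)) i * (if i = k then x k ^ m else 1))"
    unfolding mon_def
  proof (intro prod.cong refl)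
    fix i assume "i \<in> {1..n}"
    show "x i ^ \<alpha> i = x i ^ (\<alpha>(k := \<alpha> k - m)) i * (if i = k then x k ^ m else 1)"
      using assms(2) by (cases "i = k") (simp_all add: power_add[symmetric])
  qed
  also have "\<dots> = mon n (\<alpha>(k := \<alpha> k - m)) x * (\<Prod>i=1..n. if i = k then x k ^ m else 1)"
    by (simp add: mon_def prod.distrib)
  also have "(\<Prod>i=1..n. if i = k then x k ^ m else 1) = x k ^ m"
    using assms(1) by (simp add: prod.delta)
  finally show ?thesis .
qed

lemma mon_var:
  assumes "k \<in> {1..n}"
  shows "mon n (\<lambda>i. if i = k then 1 else 0) x = x k"
  using assms by (simp add: mon_def prod.delta if_distrib[of "\<lambda>e. x _ ^ e"] cong: if_cong)

lemma mon_zero [simp]: "mon n (\<lambda>_. 0) x = 1"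
  by (simp add: mon_def)

locale bez =
  fixes n :: nat and d :: "nat \<Rightarrow> nat" and Z :: "(nat \<Rightarrow> 'a::{finite,field}) set"
    and c0 :: "nat \<Rightarrow> 'a" and lam :: "nat \<Rightarrow> nat \<Rightarrow> 'a" and e :: "nat \<Rightarrow> nat \<Rightarrow> nat"
  assumes d_pos: "\<And>k. k \<in> {1..n} \<Longrightarrow> d k \<ge> 1"
    and e_small: "\<And>k j. k \<in> {1..n} \<Longrightarrow> j \<in> {1..n} \<Longrightarrow> (\<Sum>i=1..n. e j i) < d k"
    and Zsub: "Z \<subseteq> PiE {1..n} (\<lambda>_. UNIV)"
    and eqn: "\<And>x k. x \<in> Z \<Longrightarrow> k \<in> {1..n} \<Longrightarrow>
               x k ^ d k = c0 k + (\<Sum>j=1..n. lam k j * mon n (e j) x)"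
begin

definition R :: "(nat \<Rightarrow> nat) set" where "R = PiE {1..n} (\<lambda>i. {..<d i})"

lemma finite_R [simp]: "finite R"
  by (simp add: R_def finite_PiE)

definition Rep :: "((nat \<Rightarrow> 'a) \<Rightarrow> 'a) \<Rightarrow> bool" where
  "Rep g \<longleftrightarrow> (\<exists>c. \<forall>x\<in>Z. g x = (\<Sum>\<beta>\<in>R. c \<beta> * mon n \<beta> x))"

lemma Rep_cong: "Rep g \<Longrightarrow> (\<And>x. x \<in> Z \<Longrightarrow> h x = g x) \<Longrightarrow> Rep h"
  unfolding Rep_def by auto

lemma Rep_add: "Rep g \<Longrightarrow> Rep h \<Longrightarrow> Rep (\<lambda>x. g x + h x)"
proof -
  assume "Rep g" "Rep h"
  then obtain c c' where c: "\<forall>x\<in>Z. g x = (\<Sum>\<beta>\<in>R. c \<beta> * mon n \<beta> x)"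
    and c': "\<forall>x\<in>Z. h x = (\<Sum>\<beta>\<in>R. c' \<beta> * mon n \<beta> x)" unfolding Rep_def by blast
  show ?thesis unfolding Rep_def
    by (rule exI[of _ "\<lambda>\<beta>. c \<beta> + c' \<beta>"]) (simp add: c c' distrib_right sum.distrib)
qed

lemma Rep_smult: "Rep g \<Longrightarrow> Rep (\<lambda>x. a * g x)"
proof -
  assume "Rep g"
  then obtain c where c: "\<forall>x\<in>Z. g x = (\<Sum>\<beta>\<in>R. c \<beta> * mon n \<beta> x)" unfolding Rep_def by blast
  show ?thesis unfolding Rep_def
    by (rule exI[of _ "\<lambda>\<beta>. a * c \<beta>"]) (simp add: c sum_distrib_left mult.assoc)
qed

lemma Rep_zero: "Rep (\<lambda>x. 0)"
  unfolding Rep_def by (rule exI[of _ "\<lambda>_. 0"]) simp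

lemma Rep_sum: "finite J \<Longrightarrow> (\<And>j. j \<in> J \<Longrightarrow> Rep (f j)) \<Longrightarrow> Rep (\<lambda>x. \<Sum>j\<in>J. f j x)"
proof (induction J rule: finite_induct)
  case empty thus ?case by (simp add: Rep_zero)
next
  case (insert j J)
  have "Rep (\<lambda>x. f j x + (\<Sum>j\<in>J. f j x))" using insert by (intro Rep_add) auto
  thus ?case using insert by simp
qed

lemma deg_lemma: "(\<Sum>i=1..n. (\<alpha>(k := v)) i) + \<alpha> k = (\<Sum>i=1..n. \<alpha> i) + v" if "k \<in> {1..n}" for \<alpha> :: "nat \<Rightarrow> nat"
proof -
  have "(\<Sum>i=1..n. (\<alpha>(k := v)) i) = (\<Sum>i\<in>{1..n}-{k}. \<alpha> i) + v"
    using that by (simp add: sum.remove[of _ k] add.commute)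
  moreover have "(\<Sum>i=1..n. \<alpha> i) = (\<Sum>i\<in>{1..n}-{k}. \<alpha> i) + \<alpha> k"
    using that by (simp add: sum.remove[of _ k] add.commute)
  ultimately show ?thesis by simp
qed

lemma Rep_mon: "Rep (mon n \<alpha>)"
proof (induction "\<Sum>i=1..n. \<alpha> i" arbitrary: \<alpha> rule: less_induct)
  case less
  show ?case
  proof (cases "\<forall>k\<in>{1..n}. \<alpha> k < d k")
    case True
    let ?b = "restrict \<alpha> {1..n}"
    have bR: "?b \<in> R" using True by (auto simp: R_def)
    have mb: "mon n ?b x = mon n \<alpha> x" for x by (simp add: mon_def)
    show ?thesis unfolding Rep_def
    proof (rule exI[of _ "\<lambda>\<beta>. if \<beta> = ?b then 1 else 0"], intro ballI)
      fix x
      have "(\<Sum>\<beta>\<in>R. (if \<beta> = ?b then 1 else 0) * mon n \<beta> x) = mon n ?b x"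
        using bR by (simp add: if_distrib[of "\<lambda>c. c * _"] sum.delta' cong: if_cong)
      thus "mon n \<alpha> x = (\<Sum>\<beta>\<in>R. (if \<beta> = ?b then 1 else 0) * mon n \<beta> x)" using mb[of x] by metis
    qed
  next
    case False
    then obtain k where k: "k \<in> {1..n}" "d k \<le> \<alpha> k" by (auto simp: not_less)
    let ?a = "\<alpha>(k := \<alpha> k - d k)"
    have dk: "d k \<ge> 1" by (rule d_pos[OF k(1)])
    have degA: "(\<Sum>i=1..n. ?a i) + d k = (\<Sum>i=1..n. \<alpha> i)"
      using deg_lemma[OF k(1), of \<alpha> "\<alpha> k - d k"] k(2) by simp
    have IH1: "Rep (mon n ?a)" by (rule less) (use degA dk in linarith)
    have IH2: "Rep (mon n (\<lambda>i. ?a i + e j i))" if j: "j \<in> {1..n}" for j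
    proof (rule less)
      have "(\<Sum>i=1..n. ?a i + e j i) = (\<Sum>i=1..n. ?a i) + (\<Sum>i=1..n. e j i)" by (simp add: sum.distrib)
      thus "(\<Sum>i=1..n. ?a i + e j i) < (\<Sum>i=1..n. \<alpha> i)" using e_small[OF k(1) j] degA by linarith
    qed
    have "Rep (\<lambda>x. c0 k * mon n ?a x + (\<Sum>j=1..n. lam k j * mon n (\<lambda>i. ?a i + e j i) x))"
      by (intro Rep_add Rep_smult Rep_sum IH1 IH2) auto
    thus ?thesis
    proof (rule Rep_cong)
      fix x assume x: "x \<in> Z"
      have "mon n \<alpha> x = mon n ?a x * x k ^ d k" by (rule mon_upd[where k=k and n=n and m="d k" and \<alpha>=\<alpha>, OF k(1) k(2)])
      also have "\<dots> = mon n ?a x * (c0 k + (\<Sum>j=1..n. lam k j * mon n (e j) x))" by (simp add: eqn[OF x k(1)])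
      also have "\<dots> = c0 k * mon n ?a x + (\<Sum>j=1..n. lam k j * mon n (\<lambda>i. ?a i + e j i) x)"
        unfolding mon_add[of n ?a] by (simp add: distrib_left sum_distrib_left mult_ac)
      finally show "mon n \<alpha> x = c0 k * mon n ?a x + (\<Sum>j=1..n. lam k j * mon n (\<lambda>i. ?a i + e j i) x)" .
    qed
  qed
qed

lemma Rep_mult_mon: "Rep g \<Longrightarrow> Rep (\<lambda>x. g x * mon n \<gamma> x)"
proof -
  assume "Rep g"
  then obtain c where c: "\<forall>x\<in>Z. g x = (\<Sum>\<beta>\<in>R. c \<beta> * mon n \<beta> x)" unfolding Rep_def by blast
  have "Rep (\<lambda>x. \<Sum>\<beta>\<in>R. c \<beta> * mon n (\<lambda>i. \<beta> i + \<gamma> i) x)"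
    by (intro Rep_sum Rep_smult Rep_mon) simp
  thus ?thesis
    by (rule Rep_cong) (simp add: c mon_add sum_distrib_right mult.assoc)
qed

lemma Rep_mult_var: "k \<in> {1..n} \<Longrightarrow> Rep g \<Longrightarrow> Rep (\<lambda>x. g x * x k)"
  using Rep_mult_mon[of g "\<lambda>i. if i = k then 1 else 0"] by (simp add: mon_var)

lemma Rep_mult_poly: "k \<in> {1..n} \<Longrightarrow> Rep g \<Longrightarrow> Rep (\<lambda>x. g x * poly p (x k))"
proof (induction p arbitrary: g)
  case 0 thus ?case by (simp add: Rep_zero)
next
  case (pCons a p)
  have "Rep (\<lambda>x. a * g x + (g x * x k) * poly p (x k))"
    using pCons by (intro Rep_add Rep_smult pCons.IH Rep_mult_var) auto
  thus ?case by (rule Rep_cong) (simp add: algebra_simps)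
qed

lemma Rep_one: "Rep (\<lambda>x. 1)"
  by (rule Rep_cong[OF Rep_mon[of "\<lambda>_. 0"]]) simp

lemma Rep_prod_poly: "finite K \<Longrightarrow> K \<subseteq> {1..n} \<Longrightarrow> Rep (\<lambda>x. \<Prod>k\<in>K. poly (P k) (x k))"
proof (induction K rule: finite_induct)
  case empty thus ?case by (simp add: Rep_one)
next
  case (insert k K)
  have "Rep (\<lambda>x. (\<Prod>k\<in>K. poly (P k) (x k)) * poly (P k) (x k))"
    using insert by (intro Rep_mult_poly) auto
  thus ?case using insert by (simp add: mult.commute)
qed

lemma Rep_all: "Rep f"
proof -
  let ?q = "card (UNIV :: 'a set)"
  let ?P = "\<lambda>z k. 1 - [:- z k, 1:] ^ (?q - 1)"
  have q1: "?q - 1 \<ge> 1" using ff_card_ge2[where 'a='a] by simp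
  have pv: "poly (?P z k) y = (if y = z k then 1 else 0)" for z k and y :: 'a
  proof (cases "y = z k")
    case True thus ?thesis using q1 by (simp add: power_0_left)
  next
    case False
    hence "y - z k \<noteq> 0" by simp
    hence "(y - z k) ^ (?q - 1) = 1" by (rule ff_power_card_minus1)
    thus ?thesis using False by simp
  qed
  have delta: "(\<Prod>k\<in>{1..n}. poly (?P z k) (x k)) = (if x = z then 1 else 0)" if "x \<in> Z" "z \<in> Z" for x z
  proof -
    have "(\<Prod>k\<in>{1..n}. poly (?P z k) (x k)) = (\<Prod>k\<in>{1..n}. if x k = z k then 1 else 0)"
      by (intro prod.cong refl) (rule pv)
    also have "\<dots> = (if \<forall>k\<in>{1..n}. x k = z k then 1 else 0)"
      by (simp add: prod.neutral)
    also have "(\<forall>k\<in>{1..n}. x k = z k) \<longleftrightarrow> x = z"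
    proof
      assume "\<forall>k\<in>{1..n}. x k = z k"
      thus "x = z" using that Zsub by (intro PiE_ext[of _ "{1..n}" "\<lambda>_. UNIV"]) auto
    qed simp
    finally show ?thesis .
  qed
  have fZ: "finite Z" using Zsub by (rule finite_subset) (simp add: finite_PiE)
  have "Rep (\<lambda>x. \<Sum>z\<in>Z. f z * (\<Prod>k\<in>{1..n}. poly (?P z k) (x k)))"
    by (intro Rep_sum[OF fZ] Rep_smult Rep_prod_poly) auto
  thus ?thesis
  proof (rule Rep_cong)
    fix x assume x: "x \<in> Z"
    have "(\<Sum>z\<in>Z. f z * (\<Prod>k\<in>{1..n}. poly (?P z k) (x k))) = (\<Sum>z\<in>Z. if x = z then f z else 0)"
    proof (intro sum.cong refl)
      fix z assume z: "z \<in> Z"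
      show "f z * (\<Prod>k\<in>{1..n}. poly (?P z k) (x k)) = (if x = z then f z else 0)"
        by (simp only: delta[OF x z]) simp
    qed
    also have "\<dots> = f x" using x fZ by (simp add: sum.delta)
    finally show "f x = (\<Sum>z\<in>Z. f z * (\<Prod>k\<in>{1..n}. poly (?P z k) (x k)))" by simp
  qed
qed

theorem card_Z: "card Z \<le> (\<Prod>k=1..n. d k)"
proof -
  let ?q = "card (UNIV :: 'a set)"
  have fZ: "finite Z" using Zsub by (rule finite_subset) (simp add: finite_PiE)
  let ?Phi = "\<lambda>c. restrict (\<lambda>x. \<Sum>\<beta>\<in>R. c \<beta> * mon n \<beta> x) Z"
  have sub: "PiE Z (\<lambda>_. UNIV) \<subseteq> ?Phi ` PiE R (\<lambda>_. UNIV)"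
  proof
    fix f assume f: "f \<in> PiE Z (\<lambda>_. (UNIV :: 'a set))"
    obtain c where c: "\<forall>x\<in>Z. f x = (\<Sum>\<beta>\<in>R. c \<beta> * mon n \<beta> x)" using Rep_all[of f] unfolding Rep_def by blast
    have "?Phi (restrict c R) = f"
    proof (rule PiE_ext[of _ Z "\<lambda>_. UNIV"])
      show "?Phi (restrict c R) \<in> PiE Z (\<lambda>_. UNIV)" by simp
      show "f \<in> PiE Z (\<lambda>_. UNIV)" by (rule f)
      fix x assume "x \<in> Z" thus "?Phi (restrict c R) x = f x" using c by simp
    qed
    moreover have "restrict c R \<in> PiE R (\<lambda>_. UNIV)" by simp
    ultimately show "f \<in> ?Phi ` PiE R (\<lambda>_. UNIV)" by blast
  qed
  have "?q ^ card Z = card (PiE Z (\<lambda>_. (UNIV :: 'a set)))" using fZ by (simp add: card_PiE)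
  also have "\<dots> \<le> card (?Phi ` PiE R (\<lambda>_. UNIV))" by (rule card_mono[OF _ sub]) (simp add: finite_PiE)
  also have "\<dots> \<le> card (PiE R (\<lambda>_. (UNIV :: 'a set)))" by (rule card_image_le) (simp add: finite_PiE)
  also have "\<dots> = ?q ^ card R" by (simp add: card_PiE)
  finally have "?q ^ card Z \<le> ?q ^ card R" .
  hence "card Z \<le> card R" using ff_card_ge2[where 'a='a] by (simp add: power_le_imp_le_exp)
  also have "card R = (\<Prod>k=1..n. d k)" by (simp add: R_def card_PiE)
  finally show ?thesis .
qed

end



lemma final_ineq:
  fixes q dm cB C :: real and n m t :: nat
  assumes q2: "q \<ge> 2" and dm1: "dm \<ge> 1" and n1: "n \<ge> 1" and mt: "m = t - n" and t2: "2*n + 2 \<le> t"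
    and qbig: "q > (30 * real n * dm) powr ((2 * real t + 2) / (real t - 2 * real n))"
    and A1: "(q-1)^n \<le> cB * dm^n" and cB0: "cB \<ge> 0"
    and A2: "cB * (q-1)^(2*m) \<le> q^n * ((q*dm^2)^(m-n) * C * (q*(q-1)*dm)^n)"
    and A3: "C \<le> 2^m" and C0: "C \<ge> 0"
  shows False
proof -
  define k where "k = m - n"
  have mk: "m = n + k" and kt: "k = t - 2*n" using mt t2 by (auto simp: k_def)
  have q0: "q > 0" "q - 1 \<ge> 0" using q2 by auto
  have dm0: "dm > 0" using dm1 by simp
  have step1: "(q-1)^(n+2*m) \<le> dm^n * (q^n * ((q*dm^2)^k * C * (q*(q-1)*dm)^n))"
  proof -
    have "(q-1)^(n+2*m) = (q-1)^n * (q-1)^(2*m)" by (simp add: power_add)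
    also have "\<dots> \<le> (cB * dm^n) * (q-1)^(2*m)" using A1 q0 by (intro mult_right_mono) auto
    also have "\<dots> = dm^n * (cB * (q-1)^(2*m))" by (simp add: mult_ac)
    also have "\<dots> \<le> dm^n * (q^n * ((q*dm^2)^k * C * (q*(q-1)*dm)^n))"
      using A2 dm0 by (intro mult_left_mono) (auto simp: k_def)
    finally show ?thesis .
  qed
  have step2: "dm^n * (q^n * ((q*dm^2)^k * C * (q*(q-1)*dm)^n)) \<le> 2^m * dm^(2*m) * q^(m+2*n)"
  proof -
    have "(q*(q-1)*dm)^n \<le> (q*q*dm)^n" using q0 dm0 by (intro power_mono mult_right_mono mult_left_mono) auto
    hence "dm^n * (q^n * ((q*dm^2)^k * C * (q*(q-1)*dm)^n)) \<le> dm^n * (q^n * ((q*dm^2)^k * 2^m * (q*q*dm)^n))"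
      using A3 C0 q0 dm0 by (intro mult_left_mono mult_mono) auto
    also have "\<dots> = 2^m * (dm^n * (dm^2)^k * dm^n) * (q^n * q^k * q^n * q^n)"
      by (simp add: power_mult_distrib mult_ac)
    also have "(dm^2)^k = dm^(2*k)" by (rule power_mult[symmetric])
    also have "dm^n * dm^(2*k) * dm^n = dm^(n + 2*k + n)" by (simp only: power_add)
    also have "n + 2*k + n = 2*m" using mk by simp
    also have "q^n * q^k * q^n * q^n = q^(n + k + n + n)" by (simp only: power_add)
    also have "n + k + n + n = m+2*n" using mk by simp
    finally show ?thesis .
  qed
  have step3: "(q/2)^(n+2*m) \<le> (q-1)^(n+2*m)" using q2 by (intro power_mono) auto
  have "q^(n+2*m) \<le> 2^(n+2*m) * (2^m * dm^(2*m) * q^(m+2*n))"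
  proof -
    have "q^(n+2*m) / 2^(n+2*m) \<le> 2^m * dm^(2*m) * q^(m+2*n)"
      using step1 step2 step3 by (simp add: power_divide)
    thus ?thesis by (simp add: field_simps)
  qed
  moreover have "q^(n+2*m) = q^k * q^(m+2*n)"
  proof -
    have "n+2*m = k + (m+2*n)" using mk by simp
    thus ?thesis by (simp only: power_add)
  qed
  moreover have "(2::real)^(n+2*m) * (2^m * dm^(2*m) * q^(m+2*n)) = (2^(n+3*m) * dm^(2*m)) * q^(m+2*n)"
  proof -
    have "n+3*m = (n+2*m) + m" by simp
    hence "(2::real)^(n+3*m) = 2^(n+2*m) * 2^m" by (simp only: power_add)
    thus ?thesis by (simp add: mult_ac)
  qed
  ultimately have "q^k * q^(m+2*n) \<le> (2^(n+3*m) * dm^(2*m)) * q^(m+2*n)" by simp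
  hence qk: "q^k \<le> 2^(n+3*m) * dm^(2*m)" using q0 by simp
  have "(2::real)^(n+3*m) \<le> 2^(3*t)" using mt t2 by (intro power_increasing) auto
  moreover have "dm^(2*m) \<le> dm^(2*t)" using dm1 mt by (intro power_increasing) auto
  ultimately have "q^k \<le> 2^(3*t) * dm^(2*t)" using qk
    by (meson dual_order.trans mult_mono zero_le_numeral zero_le_power dm0 less_imp_le)
  hence le: "q^k \<le> 8^t * dm^(2*t)" by (simp add: power_mult)
  let ?X = "30 * real n * dm"
  let ?e = "(2 * real t + 2) / (real t - 2 * real n)"
  have X: "?X \<ge> 30 * dm" using n1 dm0 by simp
  have s: "real t - 2 * real n = real k" using kt t2 by simp
  have spos: "real k > 0" using kt t2 by simp
  have "?X powr ?e \<ge> 0" by simp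
  hence "(?X powr ?e) powr real k < q powr real k" using qbig spos by (intro powr_less_mono2) auto
  also have "q powr real k = q^k" using q0 by (simp add: powr_realpow)
  also have "(?X powr ?e) powr real k = ?X powr (2 * real t + 2)"
    using spos s by (simp add: powr_powr)
  also have "?X powr (2 * real t + 2) = ?X ^ (2*t+2)"
  proof -
    have "?X > 0" using X dm0 by linarith
    moreover have "(2 * real t + 2) = real (2*t+2)" by simp
    ultimately show ?thesis by (metis powr_realpow)
  qed
  finally have "?X ^ (2*t+2) < q^k" .
  moreover have "(30 * dm) ^ (2*t) \<le> ?X ^ (2*t+2)"
  proof -
    have "(30 * dm) ^ (2*t) \<le> ?X ^ (2*t)" using X dm0 by (intro power_mono) auto
    also have "\<dots> \<le> ?X ^ (2*t+2)" using X dm1 by (intro power_increasing) linarith+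
    finally show ?thesis .
  qed
  moreover have "8^t * dm^(2*t) \<le> (30 * dm) ^ (2*t)"
  proof -
    have "(30 * dm) ^ (2*t) = 900^t * dm^(2*t)" by (simp add: power_mult_distrib power_mult)
    moreover have "(8::real)^t \<le> 900^t" by (intro power_mono) auto
    ultimately show ?thesis using dm0 by (simp add: mult_right_mono)
  qed
  ultimately show False using le by linarith
qed



lemma hyp_inj:
  fixes A :: "nat \<Rightarrow> nat \<Rightarrow> 'a::field"
  assumes H: "hyp_H n t A" and f: "inj_on f {0..<n}" "f ` {0..<n} \<subseteq> {1..t}"
    and z: "\<forall>k<n. (\<Sum>j=1..n. \<xi> j * A j (f k)) = 0"
  shows "\<forall>j\<in>{1..n}. \<xi> j = 0"
proof -
  let ?M = "mat n n (\<lambda>(r, k). A (r + 1) (f k))"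
  have M: "?M \<in> carrier_mat n n" by simp
  have "mat_rank ?M = n" using H f unfolding hyp_H_def by blast
  hence "vec_space.rank n ?M = n" unfolding mat_rank_def by simp
  hence "det ?M \<noteq> 0" using vec_space.det_rank_iff[OF M] by blast
  hence d: "det (transpose_mat ?M) \<noteq> 0" using det_transpose[OF M] by simp
  let ?v = "vec n (\<lambda>r. \<xi> (r+1))"
  have "transpose_mat ?M *\<^sub>v ?v = 0\<^sub>v n"
  proof (rule eq_vecI)
    fix k assume k: "k < dim_vec (0\<^sub>v n :: 'a vec)"
    hence kn: "k < n" by simp
    have "(transpose_mat ?M *\<^sub>v ?v) $ k = (\<Sum>r<n. A (r+1) (f k) * \<xi> (r+1))"
      using kn by (simp add: mult_mat_vec_def scalar_prod_def row_transpose atLeast0LessThan)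
    also have "\<dots> = (\<Sum>j=1..n. \<xi> j * A j (f k))"
    proof -
      have "(\<Sum>r<n. A (r+1) (f k) * \<xi> (r+1)) = (\<Sum>j\<in>Suc ` {..<n}. A j (f k) * \<xi> j)"
        by (simp add: sum.reindex)
      also have "Suc ` {..<n} = {1..n}" by (simp add: atLeast1_atMost_eq_remove0 lessThan_Suc_atMost[symmetric] image_Suc_lessThan)
      finally show ?thesis by (simp add: mult.commute)
    qed
    also have "\<dots> = 0" using z kn by blast
    finally show "(transpose_mat ?M *\<^sub>v ?v) $ k = 0\<^sub>v n $ k" using kn by simp
  qed auto
  moreover have "?v \<in> carrier_vec n" by simp
  moreover have "\<forall>v. v \<in> carrier_vec n \<longrightarrow> v = 0\<^sub>v n \<or> transpose_mat ?M *\<^sub>v v \<noteq> 0\<^sub>v n"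
    using det_0_iff_vec_prod_zero_field[of "transpose_mat ?M" n] d by auto
  ultimately have "?v = 0\<^sub>v n" by blast
  thus ?thesis
  proof (intro ballI)
    fix j assume "?v = 0\<^sub>v n" "j \<in> {1..n}"
    hence "?v $ (j - 1) = 0\<^sub>v n $ (j - 1)" by simp
    also have "\<dots> = 0" using \<open>j\<in>{1..n}\<close> by (intro index_zero_vec) auto
    moreover have "?v $ (j - 1) = \<xi> j" using \<open>j\<in>{1..n}\<close> by (subst index_vec) auto
    ultimately show "\<xi> j = 0" by simp
  qed
qed



lemma d_mono:
  fixes d :: "nat \<Rightarrow> nat" and i j t :: nat
  assumes dd: "\<forall>i\<in>{1..<t}. d (i + 1) < (d i :: nat)" and i: "1 \<le> i" and ij: "i \<le> j" and jt: "j \<le> t"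
  shows "d j \<le> d i"
  using ij jt
proof (induction j rule: dec_induct)
  case base thus ?case by simp
next
  case (step k)
  have "d (k + 1) < d k" using dd step i by auto
  thus ?case using step by simp
qed

lemma H2_of_hyp:
  fixes A :: "nat \<Rightarrow> nat \<Rightarrow> 'a::{finite,field}"
  assumes H: "hyp_H n t A" and J: "J \<subseteq> {1..t}" "card J = n"
  shows "bij_betw (\<lambda>\<xi>. restrict (dotc n A \<xi>) J) (Vn n) (PiE J (\<lambda>_. UNIV))"
proof -
  have fJ: "finite J" using J finite_subset by blast
  obtain f where f: "bij_betw f {0..<card J} J" using ex_bij_betw_nat_finite[OF fJ] by blast
  have finj: "inj_on f {0..<n}" and fim: "f ` {0..<n} = J" using f J by (auto simp: bij_betw_def)
  have inj: "inj_on (\<lambda>\<xi>. restrict (dotc n A \<xi>) J) (Vn n)"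
  proof (rule inj_onI)
    fix \<xi> \<eta> assume \<xi>: "\<xi> \<in> Vn n" and \<eta>: "\<eta> \<in> Vn n"
      and eq: "restrict (dotc n A \<xi>) J = restrict (dotc n A \<eta>) J"
    let ?z = "\<lambda>j. \<xi> j - \<eta> j"
    have "\<forall>k<n. (\<Sum>j=1..n. ?z j * A j (f k)) = 0"
    proof (intro allI impI)
      fix k assume k: "k < n"
      have fk: "f k \<in> J" using fim k by auto
      have "dotc n A \<xi> (f k) = dotc n A \<eta> (f k)"
        using fun_cong[OF eq, of "f k"] fk by simp
      thus "(\<Sum>j=1..n. ?z j * A j (f k)) = 0"
        by (simp add: dotc_def left_diff_distrib sum_subtractf)
    qed
    moreover have fsub: "f ` {0..<n} \<subseteq> {1..t}" using fim J by simp
    ultimately have z: "\<forall>j\<in>{1..n}. ?z j = 0" by (intro hyp_inj[OF H finj fsub])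
    show "\<xi> = \<eta>"
      using \<xi> \<eta> z unfolding Vn_def by (intro PiE_ext[of _ "{1..n}" "\<lambda>_. UNIV"]) auto
  qed
  have sub: "(\<lambda>\<xi>. restrict (dotc n A \<xi>) J) ` Vn n \<subseteq> PiE J (\<lambda>_. UNIV)" by auto
  have "card ((\<lambda>\<xi>. restrict (dotc n A \<xi>) J) ` Vn n) = card (PiE J (\<lambda>_. (UNIV :: 'a set)))"
    using card_image[OF inj] J fJ by (simp add: card_Vn card_PiE)
  hence "(\<lambda>\<xi>. restrict (dotc n A \<xi>) J) ` Vn n = PiE J (\<lambda>_. UNIV)"
    using sub fJ by (intro card_subset_eq) (auto simp: finite_PiE)
  thus ?thesis using inj by (simp add: bij_betw_def)
qed

theorem mainTheorem16:
  fixes t n :: nat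
    and d :: "nat \<Rightarrow> nat"
    and c :: "nat \<Rightarrow> nat \<Rightarrow> nat"
    and A :: "nat \<Rightarrow> nat \<Rightarrow> 'a::{finite, field}"
    and a b :: "nat \<Rightarrow> 'a"
  assumes n_pos: "1 \<le> n"
    and n_lt: "real n < (real t - 1) / 2"
    and d_dec: "\<forall>i\<in>{1..<t}. d (i + 1) < d i"
    and d_t: "d t \<ge> 2"
    and d_char: "\<forall>i\<in>{1..t}. \<not> CHAR('a) dvd d i"
    and c_pos: "\<forall>j\<in>{1..n}. \<forall>i\<in>{1..n}. c j i > 0"
    and c_sum: "\<forall>j\<in>{1..n}. (\<Sum>i=1..n. c j i) < d t"
    and H: "hyp_H n t A"
    and a_nz: "\<exists>j\<in>{1..n}. a j \<noteq> 0"
    and b_nz: "\<forall>j\<in>{1..n}. b j \<noteq> 0"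
    and q_big: "real (card (UNIV :: 'a set)) > (30 * real n * real (d 1)) powr ((2 * real t + 2) / (real t - 2 * real n))"
  shows "\<exists>x :: nat \<Rightarrow> 'a. (\<forall>i\<in>{1..t}. x i \<noteq> 0) \<and>
           (\<forall>j\<in>{1..n}. (\<Sum>i=1..t. A j i * x i ^ d i) + a j = b j * (\<Prod>i=1..n. x i ^ c j i))"
proof (rule ccontr)
  assume nosol: "\<not> (\<exists>x :: nat \<Rightarrow> 'a. (\<forall>i\<in>{1..t}. x i \<noteq> 0) \<and>
           (\<forall>j\<in>{1..n}. (\<Sum>i=1..t. A j i * x i ^ d i) + a j = b j * (\<Prod>i=1..n. x i ^ c j i)))"
  define q where "q = card (UNIV :: 'a set)"
  define I where "I = {n+1..t}"
  define m where "m = t - n"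
  define dm where "dm = d 1"
  have q2: "q \<ge> 2" unfolding q_def by (rule ff_card_ge2)
  have t2: "2*n + 2 \<le> t"
  proof -
    have "2 * real n + 1 < real t" using n_lt by (simp add: field_simps)
    hence "2 * n + 1 < t" by linarith
    thus ?thesis by simp
  qed
  have fI: "finite I" unfolding I_def by simp
  have cardI: "card I = m" unfolding I_def m_def by simp
  have I1t: "I \<subseteq> {1..t}" unfolding I_def by auto
  have dle: "d t \<le> d i \<and> d i \<le> dm" if "i \<in> {1..t}" for i
    using d_mono[OF d_dec, of 1 i] d_mono[OF d_dec, of i t] that unfolding dm_def by auto
  have dm1: "dm \<ge> 1" using dle[of 1] d_t t2 by auto
  have H2: "\<And>J. J \<subseteq> {1..t} \<Longrightarrow> card J = n \<Longrightarrow>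
      bij_betw (\<lambda>\<xi>. restrict (dotc n A \<xi>) J) (Vn n) (PiE J (\<lambda>_. UNIV))"
    by (rule H2_of_hyp[OF H])
  have H1: "card {i\<in>I. dotc n A \<xi> i = 0} < n" if \<xi>: "\<xi> \<in> Vn n - {zerov n}" for \<xi>
  proof (rule ccontr)
    assume "\<not> card {i\<in>I. dotc n A \<xi> i = 0} < n"
    then obtain J where J: "J \<subseteq> {i\<in>I. dotc n A \<xi> i = 0}" "card J = n" "finite J"
      by (metis (no_types, lifting) not_less obtain_subset_with_card_n)
    have JI: "J \<subseteq> {1..t}" using J I1t by auto
    have "restrict (dotc n A \<xi>) J = restrict (dotc n A (zerov n)) J"
    proof (rule restrict_ext)
      fix i assume "i \<in> J" thus "dotc n A \<xi> i = dotc n A (zerov n) i" using J(1) by auto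
    qed
    hence "\<xi> = zerov n"
      using bij_betw_imp_inj_on[OF H2[OF JI J(2)]] \<xi> by (auto dest: inj_onD)
    thus False using \<xi> by simp
  qed
  define B where "B = {w\<in>Vn n. Ncount n I A d w = 0}"
  have bad: "real (card B) * real (q - 1) ^ (2 * m) \<le> real q ^ n *
     ((real q * real dm ^ 2) ^ (m - n) * real (m choose n) * (real q * real (q - 1) * real dm) ^ n)"
  proof -
    have "real (card B) * real (q - 1) ^ (2 * card I) \<le> real (q ^ n) *
       (\<Sum>\<xi>\<in>Vn n - {zerov n}. (cmod (\<Prod>i\<in>I. S (d i) (dotc n A \<xi> i)))^2)"
      unfolding B_def q_def by (rule bad_bound[OF fI])
    also have "\<dots> \<le> real (q ^ n) * ((real q * real dm ^ 2) ^ (card I - n) * real (card I choose n)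
        * (real q * real (q - 1) * real dm) ^ n)"
    proof (rule mult_left_mono)
      show "(\<Sum>\<xi>\<in>Vn n - {zerov n}. (cmod (\<Prod>i\<in>I. S (d i) (dotc n A \<xi> i)))^2) \<le>
         (real q * real dm ^ 2) ^ (card I - n) * real (card I choose n) * (real q * real (q - 1) * real dm) ^ n"
        unfolding q_def
      proof (rule sumP_bound[OF fI])
        show "n \<le> card I" using cardI t2 unfolding m_def by simp
        show "\<And>i. i \<in> I \<Longrightarrow> 1 \<le> d i \<and> d i \<le> dm" using dle d_t I1t by force
        show "\<And>\<xi>. \<xi> \<in> Vn n - {zerov n} \<Longrightarrow> card {i\<in>I. dotc n A \<xi> i = 0} < n" by (rule H1)
        show "\<And>J. J \<subseteq> I \<Longrightarrow> card J = n \<Longrightarrow> bij_betw (\<lambda>\<xi>. restrict (dotc n A \<xi>) J) (Vn n) (PiE J (\<lambda>_. UNIV))"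
          using H2 I1t by blast
      qed
    qed simp
    finally show ?thesis using cardI by simp
  qed
  define X where "X = PiE {1..n} (\<lambda>_. UNIV - {0::'a})"
  define W where "W = (\<lambda>x::nat \<Rightarrow> 'a. restrict (\<lambda>j. b j * (\<Prod>i=1..n. x i ^ c j i) - a j - (\<Sum>i=1..n. A j i * x i ^ d i)) {1..n})"
  have WB: "W ` X \<subseteq> B"
  proof
    fix w assume "w \<in> W ` X"
    then obtain x where x: "x \<in> X" and wx: "w = W x" by blast
    have "W x \<in> Vn n" by (simp add: W_def Vn_def)
    moreover have "Ncount n I A d (W x) = 0"
    proof (rule ccontr)
      assume "Ncount n I A d (W x) \<noteq> 0"
      hence "{y \<in> PiE I (\<lambda>_. UNIV - {0}). \<forall>j\<in>{1..n}. (\<Sum>i\<in>I. A j i * y i ^ d i) = W x j} \<noteq> {}"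
        unfolding Ncount_def by (metis card.empty)
      then obtain y where y: "y \<in> PiE I (\<lambda>_. UNIV - {0})"
        and yeq: "\<And>j. j \<in> {1..n} \<Longrightarrow> (\<Sum>i\<in>I. A j i * y i ^ d i) = W x j" by blast
      define z where "z = (\<lambda>i. if i \<in> {1..n} then x i else y i)"
      have znz: "\<forall>i\<in>{1..t}. z i \<noteq> 0"
      proof
        fix i assume i: "i \<in> {1..t}"
        show "z i \<noteq> 0"
        proof (cases "i \<in> {1..n}")
          case True thus ?thesis using x by (auto simp: z_def X_def)
        next
          case False
          hence "i \<in> I" using i unfolding I_def by auto
          thus ?thesis using y False by (auto simp: z_def)
        qed
      qed
      have zeq: "\<forall>j\<in>{1..n}. (\<Sum>i=1..t. A j i * z i ^ d i) + a j = b j * (\<Prod>i=1..n. z i ^ c j i)"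
      proof
        fix j assume j: "j \<in> {1..n}"
        have split: "{1..t} = {1..n} \<union> I" using t2 unfolding I_def by auto
        have disj: "{1..n} \<inter> I = {}" unfolding I_def by auto
        have "(\<Sum>i=1..t. A j i * z i ^ d i) = (\<Sum>i=1..n. A j i * z i ^ d i) + (\<Sum>i\<in>I. A j i * z i ^ d i)"
          unfolding split using fI disj by (intro sum.union_disjoint) auto
        also have "(\<Sum>i=1..n. A j i * z i ^ d i) = (\<Sum>i=1..n. A j i * x i ^ d i)"
          by (intro sum.cong refl) (simp add: z_def)
        also have "(\<Sum>i\<in>I. A j i * z i ^ d i) = (\<Sum>i\<in>I. A j i * y i ^ d i)"
          using disj by (intro sum.cong refl) (auto simp: z_def)
        also have "\<dots> = W x j" by (rule yeq[OF j])
        also have "W x j = b j * (\<Prod>i=1..n. x i ^ c j i) - a j - (\<Sum>i=1..n. A j i * x i ^ d i)"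
          using j by (simp add: W_def)
        also have "(\<Prod>i=1..n. x i ^ c j i) = (\<Prod>i=1..n. z i ^ c j i)"
          by (intro prod.cong refl) (simp add: z_def)
        finally show "(\<Sum>i=1..t. A j i * z i ^ d i) + a j = b j * (\<Prod>i=1..n. z i ^ c j i)"
          by (simp add: algebra_simps)
      qed
      show False using nosol znz zeq by blast
    qed
    ultimately show "w \<in> B" unfolding B_def wx by blast
  qed
  have Jn: "{1..n} \<subseteq> {1..t}" "card {1..n} = n" using t2 by auto
  have bijn: "bij_betw (\<lambda>\<xi>. restrict (dotc n A \<xi>) {1..n}) (Vn n) (PiE {1..n} (\<lambda>_. UNIV))"
    by (rule H2[OF Jn])
  have "\<forall>k\<in>{1..n}. \<exists>\<xi>. \<xi> \<in> Vn n \<and> (\<forall>i\<in>{1..n}. dotc n A \<xi> i = (if i = k then 1 else 0))"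
  proof
    fix k assume k: "k \<in> {1..n}"
    let ?u = "restrict (\<lambda>i. if i = k then (1::'a) else 0) {1..n}"
    have "?u \<in> PiE {1..n} (\<lambda>_. UNIV)" by simp
    hence "?u \<in> (\<lambda>\<xi>. restrict (dotc n A \<xi>) {1..n}) ` Vn n"
      using bij_betw_imp_surj_on[OF bijn] by simp
    then obtain \<xi> where \<xi>: "\<xi> \<in> Vn n" and eq: "?u = restrict (dotc n A \<xi>) {1..n}" by (rule imageE)
    have "\<forall>i\<in>{1..n}. dotc n A \<xi> i = (if i = k then 1 else 0)"
    proof
      fix i assume i: "i \<in> {1..n}"
      show "dotc n A \<xi> i = (if i = k then 1 else 0)" using fun_cong[OF eq, of i] i by simp
    qed
    thus "\<exists>\<xi>. \<xi> \<in> Vn n \<and> (\<forall>i\<in>{1..n}. dotc n A \<xi> i = (if i = k then 1 else 0))" using \<xi> by blast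
  qed
  then obtain \<Lambda> where \<Lambda>: "\<And>k. k \<in> {1..n} \<Longrightarrow> \<Lambda> k \<in> Vn n \<and> (\<forall>i\<in>{1..n}. dotc n A (\<Lambda> k) i = (if i = k then 1 else 0))"
    using bchoice by metis
  have fiber: "card {x\<in>X. W x = w} \<le> dm ^ n" for w
  proof -
    let ?Z = "{x\<in>X. W x = w}"
    interpret bz: bez n d ?Z "\<lambda>k. - (\<Sum>j=1..n. \<Lambda> k j * (a j + w j))" "\<lambda>k j. \<Lambda> k j * b j" c
    proof
      fix k assume k: "k \<in> {1..n}"
      hence kt: "k \<in> {1..t}" using Jn by auto
      show "1 \<le> d k" using dle[OF kt] d_t by simp
      fix j assume j: "j \<in> {1..n}"
      show "(\<Sum>i=1..n. c j i) < d k" using c_sum j dle[OF kt] by fastforce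
    next
      show "?Z \<subseteq> PiE {1..n} (\<lambda>_. UNIV)" by (auto simp: X_def)
    next
      fix x k assume x: "x \<in> ?Z" and k: "k \<in> {1..n}"
      have wj: "(\<Sum>i=1..n. A j i * x i ^ d i) = b j * mon n (c j) x - a j - w j" if j: "j \<in> {1..n}" for j
      proof -
        have "w j = W x j" using x by simp
        also have "\<dots> = b j * (\<Prod>i=1..n. x i ^ c j i) - a j - (\<Sum>i=1..n. A j i * x i ^ d i)"
          using j by (simp add: W_def)
        finally show ?thesis by (simp add: mon_def algebra_simps)
      qed
      have "x k ^ d k = (\<Sum>i=1..n. (if i = k then 1 else 0) * x i ^ d i)"
        using k by (simp add: if_distrib[of "\<lambda>c. c * _"] sum.delta cong: if_cong)
      also have "\<dots> = (\<Sum>i=1..n. dotc n A (\<Lambda> k) i * x i ^ d i)"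
        using \<Lambda>[OF k] by (intro sum.cong refl) simp
      also have "\<dots> = (\<Sum>i=1..n. \<Sum>j=1..n. \<Lambda> k j * (A j i * x i ^ d i))"
        by (simp add: dotc_def sum_distrib_right mult.assoc)
      also have "\<dots> = (\<Sum>j=1..n. \<Sum>i=1..n. \<Lambda> k j * (A j i * x i ^ d i))"
        by (rule sum.swap)
      also have "\<dots> = (\<Sum>j=1..n. \<Lambda> k j * (b j * mon n (c j) x - a j - w j))"
      proof (intro sum.cong refl)
        fix j assume j: "j \<in> {1..n}"
        have "(\<Sum>i=1..n. \<Lambda> k j * (A j i * x i ^ d i)) = \<Lambda> k j * (\<Sum>i=1..n. A j i * x i ^ d i)"
          by (simp add: sum_distrib_left)
        thus "(\<Sum>i=1..n. \<Lambda> k j * (A j i * x i ^ d i)) = \<Lambda> k j * (b j * mon n (c j) x - a j - w j)"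
          using wj[OF j] by simp
      qed
      also have "\<dots> = - (\<Sum>j=1..n. \<Lambda> k j * (a j + w j)) + (\<Sum>j=1..n. \<Lambda> k j * b j * mon n (c j) x)"
        by (simp add: algebra_simps sum.distrib sum_subtractf sum_negf)
      finally show "x k ^ d k = - (\<Sum>j=1..n. \<Lambda> k j * (a j + w j)) + (\<Sum>j=1..n. \<Lambda> k j * b j * mon n (c j) x)" .
    qed
    have "card ?Z \<le> (\<Prod>k=1..n. d k)" by (rule bz.card_Z)
    also have "\<dots> \<le> (\<Prod>k=1..n. dm)"
      by (rule prod_mono) (use dle Jn in auto)
    also have "\<dots> = dm ^ n" by simp
    finally show ?thesis .
  qed
  have cardX: "card X = (q - 1) ^ n"
    unfolding X_def q_def by (simp add: card_PiE card_Diff_singleton)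
  have XW: "card X \<le> card B * dm ^ n"
  proof -
    have "X \<subseteq> (\<Union>w\<in>W ` X. {x\<in>X. W x = w})" by blast
    hence "card X \<le> card (\<Union>w\<in>W ` X. {x\<in>X. W x = w})"
      by (intro card_mono) (auto simp: X_def finite_PiE)
    also have "\<dots> \<le> (\<Sum>w\<in>W ` X. card {x\<in>X. W x = w})"
      by (rule card_UN_le) (simp add: X_def finite_PiE)
    also have "\<dots> \<le> (\<Sum>w\<in>W ` X. dm ^ n)" by (intro sum_mono fiber)
    also have "\<dots> = card (W ` X) * dm ^ n" by simp
    also have "\<dots> \<le> card B * dm ^ n"
      using WB by (intro mult_right_mono card_mono) (auto simp: B_def)
    finally show ?thesis .
  qed
  show False
  proof (rule final_ineq[of "real q" "real dm" n m t "real (card B)" "real (m choose n)"])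
    show "2 \<le> real q" using q2 by simp
    show "1 \<le> real dm" using dm1 by simp
    show "1 \<le> n" by (rule n_pos)
    show "m = t - n" by (simp add: m_def)
    show "2 * n + 2 \<le> t" by (rule t2)
    show "(30 * real n * real dm) powr ((2 * real t + 2) / (real t - 2 * real n)) < real q"
      using q_big unfolding q_def dm_def .
    show "(real q - 1) ^ n \<le> real (card B) * real dm ^ n"
    proof -
      have "(q - 1) ^ n \<le> card B * dm ^ n" using XW cardX by simp
      hence "real ((q - 1) ^ n) \<le> real (card B * dm ^ n)" by (simp only: of_nat_le_iff)
      moreover have "real ((q - 1) ^ n) = (real q - 1) ^ n" using q2 by (simp add: of_nat_diff)
      ultimately show ?thesis by simp
    qed
    show "0 \<le> real (card B)" by simp
    show "real (card B) * (real q - 1) ^ (2 * m) \<le> real q ^ n * ((real q * real dm ^ 2) ^ (m - n)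
        * real (m choose n) * (real q * (real q - 1) * real dm) ^ n)"
      using bad q2 by (simp add: of_nat_diff)
    show "real (m choose n) \<le> 2 ^ m"
    proof -
      have "m choose n \<le> 2 ^ m" by (rule binomial_le_pow2)
      hence "real (m choose n) \<le> real (2 ^ m)" by (simp only: of_nat_le_iff)
      thus ?thesis by simp
    qed
    show "0 \<le> real (m choose n)" by simp
  qed
qed


end
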